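(* Let $X=\mathbb{Q}$ with its usual ordering, let $\Gamma$ be the group of all order-preserving permutations of $\mathbb{Q}$ acting by application, and let $I$ be the ideal of nowhere dense subsets of $\mathbb{Q}$ (in the order topology). Then the dynamical ideal $\Gamma\curvearrowright X, I$ has cofinal orbits.
   Context: For a group $\Gamma$ acting on $X$ and a $\Gamma$-invariant ideal $I$ on $X$ containing all singletons, and $a\subseteq X$, $\mathrm{pstab}(a)=\{\gamma\in\Gamma:\gamma\cdot x=x\ \forall x\in a\}$. For $a,b\in I$, $b$ is $a$-large if for every $c\in I$ there is $\gamma\in\mathrm{pstab}(a)$ with $c\subseteq\gamma\cdot b$, where $\gamma\cdot b=\{\gamma\cdot x:x\in b\}$. The dynamical ideal has cofinal orbits if for every $a\in I$ there is an $a$-large $b\in I$. *)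

theory Defs
  imports "HOL-Analysis.Analysis"
begin

text \<open>The order topology on the rationals (the library provides no topology on rat).\<close>
instantiation rat :: linorder_topology
begin
definition open_rat_def:
  "open (S :: rat set) = generate_topology (range lessThan \<union> range greaterThan) S"
instance by standard (simp add: open_rat_def fun_eq_iff)
end

definition pstab :: "('x \<Rightarrow> 'x) set \<Rightarrow> 'x set \<Rightarrow> ('x \<Rightarrow> 'x) set" where
  "pstab \<Gamma> a = {\<gamma> \<in> \<Gamma>. \<forall>x \<in> a. \<gamma> x = x}"

definition is_large :: "('x \<Rightarrow> 'x) set \<Rightarrow> 'x set set \<Rightarrow> 'x set \<Rightarrow> 'x set \<Rightarrow> bool" where
  "is_large \<Gamma> I a b \<longleftrightarrow> (\<forall>c \<in> I. \<exists>\<gamma> \<in> pstab \<Gamma> a. c \<subseteq> \<gamma> ` b)"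

definition has_cofinal_orbits :: "('x \<Rightarrow> 'x) set \<Rightarrow> 'x set set \<Rightarrow> bool" where
  "has_cofinal_orbits \<Gamma> I \<longleftrightarrow> (\<forall>a \<in> I. \<exists>b \<in> I. is_large \<Gamma> I a b)"

definition nowhere_dense :: "'a::topological_space set \<Rightarrow> bool" where
  "nowhere_dense A \<longleftrightarrow> interior (closure A) = {}"

definition order_automorphisms_rat :: "(rat \<Rightarrow> rat) set" where
  "order_automorphisms_rat = {f. bij f \<and> (\<forall>x y. x \<le> y \<longleftrightarrow> f x \<le> f y)}"

end

theory Submission
  imports Defs
begin

lemma rat_nbhd:
  assumes "open S" "(x::rat) \<in> S"
  shows "\<exists>e>0. \<forall>z. x-e<z \<and> z<x+e \<longrightarrow> z\<in>S"
proof -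
  obtain b where b: "b>x" "{x..<b} \<subseteq> S" using open_right[OF assms, of "x+1"] by auto
  obtain a where a: "a<x" "{a<..x} \<subseteq> S" using open_left[OF assms, of "x-1"] by auto
  show ?thesis
  proof (rule exI[of _ "min (b-x) (x-a)"], intro conjI allI impI)
    show "min (b-x) (x-a) > 0" using a b by auto
    fix z assume z: "x - min (b - x) (x - a) < z \<and> z < x + min (b - x) (x - a)"
    show "z \<in> S"
    proof (cases "z \<le> x")
      case True thus ?thesis using a z by auto
    next
      case False thus ?thesis using b z by auto
    qed
  qed
qed

lemma closed_nbhd:
  assumes "closed F" "(x::rat) \<notin> F"
  shows "\<exists>e>0. \<forall>z. x-e<z \<and> z<x+e \<longrightarrow> z\<notin>F"
  using rat_nbhd[of "-F" x] assms by (auto simp: closed_def)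

lemma nd_imp:
  assumes "nowhere_dense (A::rat set)" "u<v"
  shows "\<exists>p q. u\<le>p \<and> p<q \<and> q\<le>v \<and> (\<forall>z. p<z\<and>z<q \<longrightarrow> z\<notin>A)"
proof -
  have "\<not> {u<..<v} \<subseteq> closure A"
  proof
    assume "{u<..<v} \<subseteq> closure A"
    hence "{u<..<v} \<subseteq> interior (closure A)"
      by (intro interior_maximal open_greaterThanLessThan)
    moreover have "(u+v)/2 \<in> {u<..<v}" using assms(2) by (simp add: field_simps)
    ultimately show False using assms(1) unfolding nowhere_dense_def by blast
  qed
  then obtain z where z0: "z \<in> {u<..<v}" "z \<notin> closure A" by blast
  hence zz: "u<z" "z<v" "z \<notin> closure A" by auto
  have "open ({u<..<v} - closure A)" by (intro open_Diff open_greaterThanLessThan closed_closure)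
  moreover have "z \<in> {u<..<v} - closure A" using zz by auto
  ultimately obtain e where e: "e>0" "\<forall>w. z-e<w \<and> w<z+e \<longrightarrow> w\<in>{u<..<v} - closure A"
    using rat_nbhd by meson
  have 2: "max u (z-e) < min v (z+e)" using e(1) zz by auto
  have 4: "\<forall>w. max u (z-e) < w \<and> w < min v (z+e) \<longrightarrow> w \<notin> A"
  proof (intro allI impI)
    fix w assume "max u (z-e) < w \<and> w < min v (z+e)"
    hence "w \<in> {u<..<v} - closure A" using e(2) by auto
    thus "w \<notin> A" using closure_subset by blast
  qed
  show ?thesis using 2 4 by (intro exI[of _ "max u (z-e)"] exI[of _ "min v (z+e)"]) auto
qed

lemma nd_intro:
  assumes "\<And>u v. u<v \<Longrightarrow> \<exists>p q. u\<le>p \<and> p<q \<and> q\<le>v \<and> (\<forall>z. p<z\<and>z<q \<longrightarrow> z\<notin>(A::rat set))"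
  shows "nowhere_dense A"
  unfolding nowhere_dense_def
proof (rule ccontr)
  assume "interior (closure A) \<noteq> {}"
  then obtain x where x: "x \<in> interior (closure A)" by blast
  obtain e where e: "e>0" "\<forall>z. x-e<z \<and> z<x+e \<longrightarrow> z\<in>interior (closure A)"
    using rat_nbhd[OF open_interior x] by meson
  have "x-e < x+e" using e(1) by simp
  then obtain p q where pq: "x-e\<le>p" "p<q" "q\<le>x+e" "\<forall>z. p<z\<and>z<q \<longrightarrow> z\<notin>A"
    using assms by blast
  have "{p<..<q} \<inter> A = {}" using pq(4) by auto
  hence c1: "{p<..<q} \<inter> closure A = {}" by (simp add: open_Int_closure_eq_empty)
  have m: "p < (p+q)/2" "(p+q)/2 < q" using pq(2) by (simp_all add: field_simps)
  have "(p+q)/2 \<in> interior (closure A)" using e(2) m pq(1,3) by auto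
  hence c2: "(p+q)/2 \<in> closure A" using interior_subset by blast
  have "(p+q)/2 \<in> {p<..<q}" using m by simp
  thus False using c1 c2 by blast
qed

inductive_set W0 :: "rat set" where
  w_base: "1/4 \<in> W0"
| w_step: "x \<in> W0 \<Longrightarrow> (d::nat) \<le> 2 \<Longrightarrow> (x + of_nat d)/5 \<in> W0"

lemma W0_bounds: "x \<in> W0 \<Longrightarrow> 0 < x \<and> x < 1/2"
  by (induction rule: W0.induct) (auto simp: field_simps)

lemma nat_less_pow5: "(n::nat) < 5^n"
  by (induction n) auto

lemma pow5_small: assumes "(e::rat) > 0" shows "\<exists>k. 1/5^k < e"
proof -
  obtain n::nat where n: "1/e < of_nat n" using reals_Archimedean2 by blast
  have "(of_nat n::rat) < 5^n" using nat_less_pow5[of n] by (metis of_nat_less_iff of_nat_numeral of_nat_power)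
  hence "1/e < 5^n" using n by linarith
  hence "1/5^n < e" using assms by (simp add: field_simps)
  thus ?thesis by blast
qed

lemma quarter_int: "\<exists>k::int. (5::rat)^n * (1/4) = of_int k + 1/4"
proof (induction n)
  case 0 then show ?case by (intro exI[of _ 0]) simp
next
  case (Suc n)
  then obtain k where k: "(5::rat)^n * (1/4) = of_int k + 1/4" by blast
  have "(5::rat)^Suc n * (1/4) = 5 * ((5::rat)^n * (1/4))" by simp
  also have "\<dots> = of_int (5*k+1) + 1/4" using k by simp
  finally show ?case by blast
qed

lemma W0_floor: "x \<in> W0 \<Longrightarrow> 5^n * x < of_int \<lfloor>5^n * x\<rfloor> + 1/2"
proof (induction arbitrary: n rule: W0.induct)
  case w_base
  obtain k where k: "(5::rat)^n * (1/4) = of_int k + 1/4" using quarter_int by blast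
  have f: "\<lfloor>(5::rat)^n * (1/4)\<rfloor> = k" unfolding k by (intro floor_unique) auto
  have "(5::rat)^n * (1/4) < of_int k + 1/2" using k by linarith
  then show ?case by (simp only: f)
next
  case (w_step x d)
  define y where "y = (x + of_nat d)/5"
  have yW: "y \<in> W0" unfolding y_def using w_step(1,2) by (rule W0.w_step)
  have yb: "0 < y" "y < 1/2" using W0_bounds[OF yW] by auto
  have "(5::rat)^n * y < of_int \<lfloor>(5::rat)^n * y\<rfloor> + 1/2"
  proof (cases n)
    case 0
    have "\<lfloor>y\<rfloor> = 0" using yb by (intro floor_unique) auto
    then show ?thesis using yb(2) 0 by simp
  next
    case (Suc m)
    have e: "(5::rat)^n * y = 5^m * x + of_int (5^m * int d)"
      unfolding y_def Suc by (simp add: algebra_simps)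
    have "\<lfloor>(5::rat)^m * x + of_int (5^m * int d)\<rfloor> = \<lfloor>(5::rat)^m * x\<rfloor> + 5^m * int d"
      by (rule floor_add_int[symmetric])
    then show ?thesis unfolding e using w_step(3)[of m] by simp
  qed
  thus ?case unfolding y_def .
qed

lemma W0_nd:
  assumes "u < v"
  shows "\<exists>p q. u\<le>p \<and> p<q \<and> q\<le>v \<and> (\<forall>z. p<z\<and>z<q \<longrightarrow> z\<notin>W0)"
proof -
  obtain N where N: "1/5^N < (v-u)/2" using pow5_small[of "(v-u)/2"] assms by auto
  define t :: rat where "t = 5^N"
  have t0: "t > 0" by (simp add: t_def)
  have tN: "2/t < v - u" using N by (simp add: t_def field_simps)
  define k where "k = \<lceil>t*u\<rceil>"
  have k1: "t*u \<le> of_int k" "of_int k < t*u + 1" using ceiling_correct[of "t*u"] by (auto simp: k_def)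
  define p where "p = (of_int k + 1/2)/t"
  define q where "q = (of_int k + 1)/t"
  have "u \<le> p" using k1 t0 by (simp add: p_def field_simps)
  moreover have "p < q" using t0 by (simp add: p_def q_def field_simps)
  moreover have "q \<le> v"
  proof -
    have "of_int k + 1 < t*u + 2" using k1 by linarith
    hence "(of_int k + 1)/t < (t*u+2)/t" using t0 by (rule divide_strict_right_mono)
    moreover have "(t*u+2)/t = u + 2/t" using t0 by (simp add: field_simps)
    ultimately have "q < u + 2/t" by (simp add: q_def)
    thus ?thesis using tN by simp
  qed
  moreover have "\<forall>z. p<z\<and>z<q \<longrightarrow> z\<notin>W0"
  proof (intro allI impI)
    fix z assume z: "p<z \<and> z<q"
    hence z1: "of_int k + 1/2 < t*z" "t*z < of_int k + 1" using t0 by (auto simp: p_def q_def field_simps)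
    hence "\<lfloor>t*z\<rfloor> = k" by (intro floor_unique) auto
    thus "z \<notin> W0" using W0_floor[of z N] z1 by (auto simp: t_def)
  qed
  ultimately show ?thesis by blast
qed

lemma W0_near_quarter: "1/4 + (1/5)/5^k \<in> W0 \<and> 1/4 - (1/5)/5^k \<in> W0"
proof (induction k)
  case 0
  have "(1/4 + of_nat 2)/5 \<in> W0" by (rule W0.w_step[OF W0.w_base]) simp
  moreover have "(1/4 + of_nat 0)/5 \<in> W0" by (rule W0.w_step[OF W0.w_base]) simp
  moreover have "(1/4 + of_nat 2)/5 = 1/4 + (1/5)/(5::rat)^0" "(1/4 + of_nat 0)/5 = 1/4 - (1/5)/(5::rat)^0" by simp_all
  ultimately show ?case by simp
next
  case (Suc k)
  have a: "1/4 + (1/5)/5^k \<in> W0" and b: "1/4 - (1/5)/5^k \<in> W0" using Suc by auto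
  have m1: "((1/4 + (1/5)/5^k) + of_nat 1)/5 \<in> W0" by (rule W0.w_step[OF a]) simp
  have m2: "((1/4 - (1/5)/5^k) + of_nat 1)/5 \<in> W0" by (rule W0.w_step[OF b]) simp
  have e1: "((1/4 + (1/5)/5^k) + of_nat 1)/5 = 1/4 + (1/5)/(5::rat)^Suc k"
      and e2: "((1/4 - (1/5)/5^k) + of_nat 1)/5 = 1/4 - (1/5)/(5::rat)^Suc k" by (simp_all add: field_simps)
  show ?case using m1 m2 unfolding e1 e2 by blast
qed

definition TS :: "rat set \<Rightarrow> rat \<Rightarrow> bool" where
  "TS A x \<longleftrightarrow> (\<forall>e>0. (\<exists>w\<in>A. x<w \<and> w<x+e) \<and> (\<exists>w\<in>A. x-e<w \<and> w<x))"

lemma W0_TS: "x \<in> W0 \<Longrightarrow> TS W0 x"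
proof (induction rule: W0.induct)
  case w_base
  show ?case unfolding TS_def
  proof (intro allI impI)
    fix e::rat assume e: "e>0"
    obtain k where k: "1/5^k < e" using pow5_small[OF e] by blast
    have "(1/5)/5^k < e" using k by (simp add: field_simps)
    hence "1/4 + (1/5)/5^k < 1/4 + e" "1/4 - e < 1/4 - (1/5)/5^k" by auto
    moreover have "(0::rat) < (1/5)/5^k" by simp
    hence "1/4 - (1/5)/5^k < (1/4::rat)" "1/4 < 1/4 + (1/5)/(5::rat)^k" by linarith+
    ultimately show "(\<exists>w\<in>W0. 1/4<w \<and> w<1/4+e) \<and> (\<exists>w\<in>W0. 1/4-e<w \<and> w<1/4)"
      using W0_near_quarter[of k] by blast
  qed
next
  case (w_step x d)
  show ?case unfolding TS_def
  proof (intro allI impI)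
    fix e::rat assume e: "e>0"
    have "5*e > 0" using e by simp
    then obtain w1 w2 where w: "w1\<in>W0" "x<w1" "w1<x+5*e" "w2 \<in> W0" "x-5*e<w2" "w2<x"
      using w_step(3) unfolding TS_def by blast
    have "(w1 + of_nat d)/5 \<in> W0" "(w2 + of_nat d)/5 \<in> W0" using w w_step(2) by (auto intro: W0.w_step)
    moreover have "(x + of_nat d)/5 < (w1 + of_nat d)/5" "(w1 + of_nat d)/5 < (x + of_nat d)/5 + e"
      "(x + of_nat d)/5 - e < (w2 + of_nat d)/5" "(w2 + of_nat d)/5 < (x + of_nat d)/5"
      using w by (auto simp: field_simps)
    ultimately show "(\<exists>w\<in>W0. (x + of_nat d)/5<w \<and> w<(x + of_nat d)/5+e) \<and>
       (\<exists>w\<in>W0. (x + of_nat d)/5-e<w \<and> w<(x + of_nat d)/5)" by blast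
  qed
qed

definition dl :: "nat \<Rightarrow> rat \<Rightarrow> rat" where "dl n x = of_int \<lfloor>2^n * x\<rfloor> / 2^n"
definition good :: "rat set \<Rightarrow> nat \<Rightarrow> rat \<Rightarrow> bool" where
  "good F n x \<longleftrightarrow> (\<forall>z. dl n x \<le> z \<and> z \<le> dl n x + 1/2^n \<longrightarrow> z \<notin> F)"
definition NN :: "rat set \<Rightarrow> rat \<Rightarrow> nat" where "NN F x = (LEAST n. good F n x)"
definition pp :: "rat set \<Rightarrow> rat \<Rightarrow> rat" where "pp F x = dl (NN F x) x"
definition KK :: "rat set \<Rightarrow> rat set" where
  "KK F = {x. x \<notin> F \<and> (x - pp F x) * 2^(NN F x) \<in> W0}"

lemma dl_mem: "dl n x \<le> x \<and> x < dl n x + 1/2^n"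
proof -
  have "of_int \<lfloor>2^n * x\<rfloor> \<le> 2^n * x" "2^n * x < of_int \<lfloor>2^n * x\<rfloor> + (1::rat)"
    using floor_correct[of "2^n * x"] by simp_all
  moreover have "(0::rat) < 2^n" by simp
  ultimately show ?thesis unfolding dl_def by (simp add: field_simps)
qed

lemma dl_same:
  assumes "dl n x \<le> w" "w < dl n x + 1/2^n"
  shows "\<lfloor>(2::rat)^n * w\<rfloor> = \<lfloor>2^n * x\<rfloor>"
proof -
  have t: "(0::rat) < 2^n" by simp
  have "of_int \<lfloor>(2::rat)^n * x\<rfloor> \<le> 2^n * w" "2^n * w < of_int \<lfloor>(2::rat)^n * x\<rfloor> + 1"
    using assms t unfolding dl_def by (simp_all add: field_simps)
  thus ?thesis by (intro floor_unique)
qed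

lemma floor_mult_int:
  assumes "(c::int) > 0" "\<lfloor>of_int c * X\<rfloor> = \<lfloor>of_int c * (W::rat)\<rfloor>"
  shows "\<lfloor>X\<rfloor> = \<lfloor>W\<rfloor>"
proof -
  define j where "j = \<lfloor>X\<rfloor>"
  have j1: "of_int j \<le> X" "X < of_int j + 1" unfolding j_def using floor_correct[of X] by simp_all
  have cp: "(0::rat) < of_int c" using assms(1) by simp
  have "of_int (c*j) \<le> of_int c * X" using j1 cp by simp
  hence "c*j \<le> \<lfloor>of_int c * X\<rfloor>" by (simp add: le_floor_iff)
  hence "c*j \<le> \<lfloor>of_int c * W\<rfloor>" using assms(2) by simp
  hence "of_int (c*j) \<le> of_int c * W" by (simp add: le_floor_iff)
  hence w1: "of_int j \<le> W" using cp by (simp add: mult_le_cancel_left_pos)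
  have "of_int c * X < of_int (c*(j+1))" using j1 cp by simp
  hence "\<lfloor>of_int c * X\<rfloor> < c*(j+1)" by (simp add: floor_less_iff)
  hence "\<lfloor>of_int c * W\<rfloor> < c*(j+1)" using assms(2) by simp
  hence "of_int c * W < of_int (c*(j+1))" by (simp add: floor_less_iff)
  hence w2: "W < of_int j + 1" using cp by (simp add: mult_less_cancel_left_pos)
  show ?thesis using w1 w2 floor_unique unfolding j_def by metis
qed

lemma floor_nest:
  assumes "m \<le> n" "\<lfloor>(2::rat)^n * w\<rfloor> = \<lfloor>2^n * (x::rat)\<rfloor>"
  shows "\<lfloor>(2::rat)^m * w\<rfloor> = \<lfloor>2^m * x\<rfloor>"
proof -
  have e: "(2::rat)^n = of_int (2^(n-m)) * 2^m" using assms(1)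
    by (simp add: power_add[symmetric])
  show ?thesis
    by (rule floor_mult_int[of "2^(n-m)"]) (use assms(2) e in \<open>simp_all add: mult.assoc\<close>)
qed

lemma div_lt_helper: assumes "(t::rat) > 0" "a < b + e*t" shows "a/t < b/t + e"
proof -
  have "a/t < (b + e*t)/t" by (rule divide_strict_right_mono[OF assms(2) assms(1)])
  also have "(b + e*t)/t = b/t + e" using assms(1) by (simp add: add_divide_distrib)
  finally show ?thesis .
qed

lemma div_lt_helper2: assumes "(t::rat) > 0" "b < a + e*t" shows "b/t - e < a/t"
  using div_lt_helper[OF assms] by simp

lemma pow2_small: assumes "(e::rat) > 0" shows "\<exists>k. 1/2^k < e"
proof -
  obtain n::nat where n: "1/e < of_nat n" using reals_Archimedean2 by blast
  have "(of_nat n::rat) < 2^n" using less_exp[of n] by (metis of_nat_less_iff of_nat_numeral of_nat_power)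
  hence "1/e < 2^n" using n by linarith
  hence "1/2^n < e" using assms by (simp add: field_simps)
  thus ?thesis by blast
qed

context
  fixes F :: "rat set"
  assumes clF: "closed F"
begin

lemma good_ex: assumes "x \<notin> F" shows "\<exists>n. good F n x"
proof -
  obtain e where e: "e>0" "\<forall>z. x-e<z \<and> z<x+e \<longrightarrow> z\<notin>F" using closed_nbhd[OF clF assms] by blast
  obtain n where n: "1/2^n < e" using pow2_small[OF e(1)] by blast
  have "good F n x" unfolding good_def
  proof (intro allI impI)
    fix z assume z: "dl n x \<le> z \<and> z \<le> dl n x + 1/2^n"
    have "x - e < z" "z < x + e" using z dl_mem[of n x] n by linarith+
    thus "z \<notin> F" using e by blast
  qed
  thus ?thesis by blast
qed

lemma good_NN: "x \<notin> F \<Longrightarrow> good F (NN F x) x"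
  unfolding NN_def using good_ex by (rule LeastI_ex)

lemma same_T:
  assumes y: "y \<notin> F" and z: "pp F y \<le> z" "z < pp F y + 1/2^(NN F y)"
  shows "z \<notin> F \<and> NN F z = NN F y \<and> pp F z = pp F y"
proof -
  define N where "N = NN F y"
  have fz: "\<lfloor>(2::rat)^N * z\<rfloor> = \<lfloor>2^N * y\<rfloor>" using dl_same z unfolding pp_def N_def by blast
  have dm: "dl m z = dl m y" if "m \<le> N" for m
    using floor_nest[OF that fz] unfolding dl_def by simp
  have gm: "good F m z \<longleftrightarrow> good F m y" if "m \<le> N" for m
    unfolding good_def dm[OF that] ..
  have gN: "good F N y" using good_NN[OF y] unfolding N_def .
  have "NN F z = N" unfolding NN_def
  proof (rule Least_equality)
    show "good F N z" using gm gN by simp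
    fix m assume "good F m z"
    show "N \<le> m"
    proof (rule ccontr)
      assume "\<not> N \<le> m"
      hence "m < N" by simp
      hence "good F m y" using gm \<open>good F m z\<close> by simp
      thus False using \<open>m < N\<close> not_less_Least unfolding N_def NN_def by blast
    qed
  qed
  moreover have "z \<notin> F" using gN z unfolding good_def pp_def N_def by auto
  moreover have "pp F z = pp F y" unfolding pp_def using \<open>NN F z = N\<close> dm[of N] N_def by simp
  ultimately show ?thesis unfolding N_def by blast
qed

lemma pp_mem: "pp F x \<le> x \<and> x < pp F x + 1/2^(NN F x)"
  unfolding pp_def by (rule dl_mem)

lemma K_intro:
  assumes y: "y \<notin> F" and w: "w \<in> W0"
  shows "pp F y + w/2^(NN F y) \<in> KK F"
proof -
  define N where "N = NN F y"
  define P where "P = pp F y"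
  have wb: "0 < w" "w < 1/2" using W0_bounds[OF w] by auto
  have t: "(0::rat) < 2^N" by simp
  have "P \<le> P + w/2^N" using wb t by simp
  moreover have "P + w/2^N < P + 1/2^N" using wb t by (simp add: field_simps)
  ultimately have s: "P + w/2^N \<notin> F \<and> NN F (P + w/2^N) = N \<and> pp F (P + w/2^N) = P"
    using same_T[OF y] unfolding N_def P_def by blast
  have "(P + w/2^N - P) * 2^N = w" by simp
  thus ?thesis using s w unfolding KK_def N_def P_def by simp
qed

lemma K_TS: assumes x: "x \<in> KK F" shows "TS (KK F) x"
  unfolding TS_def
proof (intro allI impI)
  fix e :: rat assume e: "e > 0"
  define N where "N = NN F x"
  define P where "P = pp F x"
  have xF: "x \<notin> F" using x unfolding KK_def by auto
  define w0 where "w0 = (x - P) * 2^N"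
  have w0: "w0 \<in> W0" using x unfolding KK_def w0_def P_def N_def by auto
  have t: "(0::rat) < 2^N" by simp
  have xw: "x = P + w0/2^N" unfolding w0_def by simp
  have "e * 2^N > 0" using e t by simp
  then obtain w1 w2 where w: "w1 \<in> W0" "w0 < w1" "w1 < w0 + e*2^N" "w2 \<in> W0" "w0 - e*2^N < w2" "w2 < w0"
    using W0_TS[OF w0] unfolding TS_def by blast
  have k1: "P + w1/2^N \<in> KK F" "P + w2/2^N \<in> KK F"
    using K_intro[OF xF w(1)] K_intro[OF xF w(4)] unfolding N_def P_def by auto
  have "w0/2^N < w1/2^N" "w2/2^N < w0/2^N" using w t by (simp_all add: divide_strict_right_mono)
  moreover have "w1/2^N < w0/2^N + e" using div_lt_helper[OF t w(3)] .
  moreover have "w0/2^N - e < w2/2^N" using div_lt_helper2[OF t] w(5) by (simp add: algebra_simps)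
  ultimately have "x < P + w1/2^N" "P + w1/2^N < x + e" "x - e < P + w2/2^N" "P + w2/2^N < x"
    unfolding xw by linarith+
  thus "(\<exists>w\<in>KK F. x < w \<and> w < x + e) \<and> (\<exists>w\<in>KK F. x - e < w \<and> w < x)" using k1 by blast
qed

lemma K_lower:
  assumes x: "x \<notin> F"
  shows "\<exists>k\<in>KK F. k < x \<and> (\<forall>w. k \<le> w \<and> w \<le> x \<longrightarrow> w \<notin> F)"
proof -
  define N where "N = NN F x"
  define P where "P = pp F x"
  have gx: "good F N x" using good_NN[OF x] unfolding N_def .
  have Px: "P \<le> x" "x < P + 1/2^N" using pp_mem[of x] unfolding P_def N_def by auto
  have PF: "P \<notin> F" using gx unfolding good_def pp_def P_def N_def[symmetric] by simp
  obtain e where e: "e>0" "\<forall>z. P-e<z \<and> z<P+e \<longrightarrow> z\<notin>F" using closed_nbhd[OF clF PF] by blast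
  define x' where "x' = P - e/2"
  have x'F: "x' \<notin> F" using e unfolding x'_def by auto
  define N' where "N' = NN F x'"
  define P' where "P' = pp F x'"
  have gx': "good F N' x'" using good_NN[OF x'F] unfolding N'_def .
  have Px': "P' \<le> x'" "x' < P' + 1/2^N'" using pp_mem[of x'] unfolding P'_def N'_def by auto
  define k where "k = P' + (1/4)/2^N'"
  have kK: "k \<in> KK F" unfolding k_def P'_def N'_def by (rule K_intro[OF x'F W0.w_base])
  have t': "(0::rat) < 2^N'" by simp
  have kb: "P' < k" "k < P' + 1/2^N'" unfolding k_def using t' by (simp_all add: field_simps)
  have xP: "x' < P" using e unfolding x'_def by simp
  have key: "P' + 1/2^N' \<le> P"
  proof (rule ccontr)
    assume "\<not> ?thesis"
    hence "P < P' + 1/2^N'" by simp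
    moreover have "P' \<le> P" using Px' xP by simp
    ultimately have "NN F P = N' \<and> pp F P = P'" using same_T[OF x'F, of P] unfolding P'_def N'_def by blast
    moreover have "NN F P = N \<and> pp F P = P" using same_T[OF x, of P] Px unfolding P_def N_def by auto
    ultimately have "P' = P" by simp
    thus False using Px' xP by simp
  qed
  have "k < x" using kb key Px by simp
  moreover have "\<forall>w. k \<le> w \<and> w \<le> x \<longrightarrow> w \<notin> F"
  proof (intro allI impI)
    fix w assume w: "k \<le> w \<and> w \<le> x"
    show "w \<notin> F"
    proof (cases "w \<le> P' + 1/2^N'")
      case True
      thus ?thesis using gx' w kb unfolding good_def pp_def P'_def N'_def by auto
    next
      case False
      show ?thesis
      proof (cases "w \<le> P")
        case True
        have "P - e < w" using False Px' e(1) unfolding x'_def by linarith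
        thus ?thesis using e True by simp
      next
        case False
        thus ?thesis using gx w Px unfolding good_def pp_def P_def N_def by auto
      qed
    qed
  qed
  ultimately show ?thesis using kK by blast
qed

lemma K_upper:
  assumes x: "x \<notin> F"
  shows "\<exists>k\<in>KK F. x < k \<and> (\<forall>w. x \<le> w \<and> w \<le> k \<longrightarrow> w \<notin> F)"
proof -
  define N where "N = NN F x"
  define P where "P = pp F x"
  define Q where "Q = P + 1/2^N"
  have gx: "good F N x" using good_NN[OF x] unfolding N_def .
  have Px: "P \<le> x" "x < Q" using pp_mem[of x] unfolding P_def N_def Q_def by auto
  have QF: "Q \<notin> F" using gx unfolding good_def pp_def Q_def P_def N_def[symmetric] by simp
  obtain e where e: "e>0" "\<forall>z. Q-e<z \<and> z<Q+e \<longrightarrow> z\<notin>F" using closed_nbhd[OF clF QF] by blast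
  define x' where "x' = Q + e/2"
  have x'F: "x' \<notin> F" using e unfolding x'_def by auto
  define N' where "N' = NN F x'"
  define P' where "P' = pp F x'"
  have gx': "good F N' x'" using good_NN[OF x'F] unfolding N'_def .
  have Px': "P' \<le> x'" "x' < P' + 1/2^N'" using pp_mem[of x'] unfolding P'_def N'_def by auto
  define k where "k = P' + (1/4)/2^N'"
  have kK: "k \<in> KK F" unfolding k_def P'_def N'_def by (rule K_intro[OF x'F W0.w_base])
  have t': "(0::rat) < 2^N'" by simp
  have kb: "P' < k" "k < P' + 1/2^N'" unfolding k_def using t' by (simp_all add: field_simps)
  have xQ: "Q < x'" using e unfolding x'_def by simp
  have key: "Q \<le> P'"
  proof (rule ccontr)
    assume "\<not> ?thesis"
    hence PQ: "P' < Q" by simp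
    define w0 where "w0 = max P P'"
    have "P \<le> w0" "w0 < P + 1/2^N" using PQ Px unfolding w0_def Q_def by auto
    hence "NN F w0 = N \<and> pp F w0 = P" using same_T[OF x, of w0] unfolding P_def N_def by blast
    moreover have "P' \<le> w0" "w0 < P' + 1/2^N'" using PQ Px Px' xQ unfolding w0_def Q_def by auto
    hence "NN F w0 = N' \<and> pp F w0 = P'" using same_T[OF x'F, of w0] unfolding P'_def N'_def by blast
    ultimately have "N = N'" "P = P'" by auto
    thus False using Px' xQ unfolding Q_def by simp
  qed
  have "x < k" using kb key Px by simp
  moreover have "\<forall>w. x \<le> w \<and> w \<le> k \<longrightarrow> w \<notin> F"
  proof (intro allI impI)
    fix w assume w: "x \<le> w \<and> w \<le> k"
    show "w \<notin> F"
    proof (cases "w \<le> Q")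
      case True
      thus ?thesis using gx w Px unfolding good_def pp_def P_def N_def Q_def by auto
    next
      case False
      show ?thesis
      proof (cases "w \<le> x'")
        case True
        have "w < Q + e" using True e unfolding x'_def by simp
        thus ?thesis using e False by simp
      next
        case False
        thus ?thesis using gx' w kb Px' unfolding good_def pp_def P'_def N'_def by auto
      qed
    qed
  qed
  ultimately show ?thesis using kK by blast
qed

lemma BB_nd:
  assumes ndF: "nowhere_dense F"
  shows "nowhere_dense (F \<union> KK F)"
proof (rule nd_intro)
  fix u v :: rat assume uv: "u < v"
  obtain p1 q1 where pq1: "u\<le>p1" "p1<q1" "q1\<le>v" "\<forall>z. p1<z\<and>z<q1 \<longrightarrow> z\<notin>F"
    using nd_imp[OF ndF uv] by blast
  define z where "z = (p1+q1)/2"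
  have z: "p1 < z" "z < q1" using pq1(2) unfolding z_def by (simp_all add: field_simps)
  hence zF: "z \<notin> F" using pq1(4) by blast
  define N where "N = NN F z"
  define P where "P = pp F z"
  define t :: rat where "t = 2^N"
  have t: "t > 0" unfolding t_def by simp
  have Pz: "P \<le> z" "z < P + 1/t" using pp_mem[of z] unfolding P_def N_def t_def by auto
  define u' where "u' = max p1 P"
  define v' where "v' = min q1 (P + 1/t)"
  have "0 < 1/t" using t by simp
  hence uv': "u' < v'" using z Pz pq1(2) unfolding u'_def v'_def max_less_iff_conj min_less_iff_conj by linarith
  define s1 where "s1 = (u' - P) * t"
  define t1 where "t1 = (v' - P) * t"
  have "s1 < t1" using uv' t unfolding s1_def t1_def by simp
  then obtain s2 t2 where st: "s1\<le>s2" "s2<t2" "t2\<le>t1" "\<forall>z. s2<z\<and>z<t2 \<longrightarrow> z\<notin>W0"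
    using W0_nd by blast
  define p0 where "p0 = P + s2/t"
  define q0 where "q0 = P + t2/t"
  have "u' \<le> p0" using st(1) t unfolding p0_def s1_def by (simp add: field_simps)
  moreover have "q0 \<le> v'" using st(3) t unfolding q0_def t1_def by (simp add: field_simps)
  moreover have "p0 < q0" using st(2) t unfolding p0_def q0_def by (simp add: divide_strict_right_mono)
  moreover have "\<forall>w. p0<w \<and> w<q0 \<longrightarrow> w \<notin> F \<union> KK F"
  proof (intro allI impI)
    fix w assume w: "p0<w \<and> w<q0"
    have wu: "u' < w" "w < v'" using w \<open>u' \<le> p0\<close> \<open>q0 \<le> v'\<close> by auto
    hence "P \<le> w" "w < P + 1/2^N" unfolding u'_def v'_def t_def by auto
    hence s: "w \<notin> F \<and> NN F w = N \<and> pp F w = P" using same_T[OF zF, of w] unfolding P_def N_def by blast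
    have "s2 < (w - P)*t" "(w-P)*t < t2" using w t unfolding p0_def q0_def by (simp_all add: field_simps)
    hence "(w - P) * 2^N \<notin> W0" using st(4) unfolding t_def by blast
    thus "w \<notin> F \<union> KK F" using s unfolding KK_def by auto
  qed
  ultimately show "\<exists>p q. u\<le>p \<and> p<q \<and> q\<le>v \<and> (\<forall>z. p<z\<and>z<q \<longrightarrow> z\<notin>F \<union> KK F)"
    using pq1(1,3) unfolding u'_def v'_def by (intro exI[of _ p0] exI[of _ q0]) auto
qed

end

definition nxt :: "((rat \<times> rat) set \<Rightarrow> bool) \<Rightarrow> (rat \<times> rat) set \<Rightarrow> nat \<Rightarrow> (rat \<times> rat) set" where
  "nxt P R n = (let x = from_nat n; R1 = insert (x, SOME y. P (insert (x,y) R)) R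
                in insert (SOME x'. P (insert (x', x) R1), x) R1)"

primrec Rs :: "((rat \<times> rat) set \<Rightarrow> bool) \<Rightarrow> (rat \<times> rat) set \<Rightarrow> nat \<Rightarrow> (rat \<times> rat) set" where
  "Rs P R0 0 = R0"
| "Rs P R0 (Suc n) = nxt P (Rs P R0 n) n"

lemma back_forth:
  fixes P :: "(rat \<times> rat) set \<Rightarrow> bool"
  assumes P0: "P R0"
    and forth: "\<And>R x. P R \<Longrightarrow> \<exists>y. P (insert (x,y) R)"
    and bk: "\<And>R y. P R \<Longrightarrow> \<exists>x. P (insert (x,y) R)"
    and mono: "\<And>R a b c d. P R \<Longrightarrow> (a,b)\<in>R \<Longrightarrow> (c,d)\<in>R \<Longrightarrow> a<c \<longleftrightarrow> b<d"
  shows "\<exists>f. bij f \<and> (\<forall>x y. x \<le> y \<longleftrightarrow> f x \<le> f y) \<and> (\<forall>x. \<exists>R. P R \<and> (x, f x) \<in> R)"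
proof -
  have step: "P (nxt P R n) \<and> R \<subseteq> nxt P R n \<and> (\<exists>y. (from_nat n, y) \<in> nxt P R n) \<and> (\<exists>x. (x, from_nat n) \<in> nxt P R n)"
    if "P R" for R n
  proof -
    define x where "x = (from_nat n :: rat)"
    define R1 where "R1 = insert (x, SOME y. P (insert (x,y) R)) R"
    have P1: "P R1" unfolding R1_def using someI_ex[OF forth[OF that]] .
    define R2 where "R2 = insert (SOME x'. P (insert (x', x) R1), x) R1"
    have P2: "P R2" unfolding R2_def using someI_ex[OF bk[OF P1]] .
    have e: "nxt P R n = R2" unfolding nxt_def R2_def R1_def x_def Let_def ..
    show ?thesis unfolding e x_def[symmetric] using P2 unfolding R2_def R1_def by blast
  qed
  have PR: "P (Rs P R0 n)" for n by (induction n) (use P0 step in auto)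
  have inc: "Rs P R0 n \<subseteq> Rs P R0 (Suc n)" for n using step[OF PR[of n], of n] by simp
  have incle: "m \<le> n \<Longrightarrow> Rs P R0 m \<subseteq> Rs P R0 n" for m n
  proof (induction n)
    case 0 thus ?case by simp
  next
    case (Suc n)
    show ?case
    proof (cases "m = Suc n")
      case False
      hence "m \<le> n" using Suc.prems by simp
      thus ?thesis using Suc.IH inc[of n] by blast
    qed simp
  qed
  define U where "U = (\<Union>n. Rs P R0 n)"
  have both: "\<exists>n. (a,b) \<in> Rs P R0 n \<and> (c,d) \<in> Rs P R0 n" if ab: "(a,b)\<in>U" and cd: "(c,d)\<in>U" for a b c d
  proof -
    obtain m1 m2 where "(a,b) \<in> Rs P R0 m1" "(c,d) \<in> Rs P R0 m2" using ab cd unfolding U_def by blast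
    thus ?thesis using incle[of m1 "max m1 m2"] incle[of m2 "max m1 m2"] by auto
  qed
  have monoU: "a<c \<longleftrightarrow> b<d" if "(a,b)\<in>U" "(c,d)\<in>U" for a b c d
    using both[OF that] mono PR by blast
  have dom: "\<exists>y. (x,y) \<in> U" for x
  proof -
    obtain y where "(x,y) \<in> nxt P (Rs P R0 (to_nat x)) (to_nat x)" using step[OF PR[of "to_nat x"], of "to_nat x"] by auto
    hence "(x,y) \<in> Rs P R0 (Suc (to_nat x))" by simp
    thus ?thesis unfolding U_def by blast
  qed
  have ran: "\<exists>x. (x,y) \<in> U" for y
  proof -
    obtain x where "(x,y) \<in> nxt P (Rs P R0 (to_nat y)) (to_nat y)" using step[OF PR[of "to_nat y"], of "to_nat y"] by auto
    hence "(x,y) \<in> Rs P R0 (Suc (to_nat y))" by simp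
    thus ?thesis unfolding U_def by blast
  qed
  define f where "f x = (SOME y. (x,y) \<in> U)" for x
  have fU: "(x, f x) \<in> U" for x unfolding f_def using someI_ex[OF dom] .
  have sm: "x < x' \<longleftrightarrow> f x < f x'" for x x' using monoU[OF fU fU] .
  have le: "x \<le> y \<longleftrightarrow> f x \<le> f y" for x y using sm[of y x] by (simp add: not_less[symmetric])
  have "inj f"
  proof (rule injI)
    fix x y assume "f x = f y"
    thus "x = y" using sm[of x y] sm[of y x] by (metis neqE less_irrefl)
  qed
  moreover have "surj f"
  proof -
    have "\<exists>x. y = f x" for y
    proof -
      obtain x where x: "(x,y) \<in> U" using ran by blast
      have "\<not> f x < y" using monoU[OF fU[of x] x] by simp
      moreover have "\<not> y < f x" using monoU[OF x fU[of x]] by simp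
      ultimately show ?thesis by (metis neqE)
    qed
    thus ?thesis by (metis surjI)
  qed
  ultimately have "bij f" by (simp add: bij_def)
  moreover have "\<exists>R. P R \<and> (x, f x) \<in> R" for x using fU[of x] PR unfolding U_def by blast
  ultimately show ?thesis using le by blast
qed

definition monoR :: "(rat \<times> rat) set \<Rightarrow> bool" where
  "monoR R \<longleftrightarrow> (\<forall>a b c d. (a,b)\<in>R \<longrightarrow> (c,d)\<in>R \<longrightarrow> (a<c \<longleftrightarrow> b<d))"
definition Jc :: "rat set \<Rightarrow> rat \<Rightarrow> rat set" where
  "Jc F t = {z. z\<notin>F \<and> (\<forall>f\<in>F. f<t \<longleftrightarrow> f<z)}"
definition wfR :: "rat set \<Rightarrow> (rat \<times> rat) set \<Rightarrow> bool" where
  "wfR F R \<longleftrightarrow> monoR R \<and> (\<forall>f\<in>F. (f,f)\<in>R) \<and> finite {p\<in>R. snd p \<notin> F}"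
definition Lo :: "rat set \<Rightarrow> (rat \<times> rat) set \<Rightarrow> rat \<Rightarrow> (rat \<times> rat) set" where
  "Lo F R x = {p\<in>R. fst p < x \<and> snd p \<in> Jc F x}"
definition Up :: "rat set \<Rightarrow> (rat \<times> rat) set \<Rightarrow> rat \<Rightarrow> (rat \<times> rat) set" where
  "Up F R x = {p\<in>R. x < fst p \<and> snd p \<in> Jc F x}"
definition Oset :: "rat set \<Rightarrow> (rat \<times> rat) set \<Rightarrow> rat \<Rightarrow> rat set" where
  "Oset F R x = {y\<in>Jc F x. (\<forall>p\<in>Lo F R x. snd p < y) \<and> (\<forall>p\<in>Up F R x. y < snd p)}"

lemma monoR_D: "monoR R \<Longrightarrow> (a,b)\<in>R \<Longrightarrow> (c,d)\<in>R \<Longrightarrow> a<c \<longleftrightarrow> b<d"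
  unfolding monoR_def by blast

lemma monoR_conv: "monoR (converse R) \<longleftrightarrow> monoR R"
  unfolding monoR_def by auto

lemma mono_eq: "monoR R \<Longrightarrow> (a,b)\<in>R \<Longrightarrow> (c,d)\<in>R \<Longrightarrow> a=c \<longleftrightarrow> b=d"
  using monoR_D[of R a b c d] monoR_D[of R c d a b] by (metis neqE less_irrefl)

lemma wfR_F: "wfR F R \<Longrightarrow> (a,b)\<in>R \<Longrightarrow> a\<in>F \<or> b\<in>F \<Longrightarrow> a=b"
  unfolding wfR_def using mono_eq by metis

lemma wfR_conv: assumes "wfR F R" shows "wfR F (converse R)"
proof -
  have "{p\<in>converse R. snd p \<notin> F} = (\<lambda>(a,b). (b,a)) ` {p\<in>R. snd p \<notin> F}"
  proof
    show "{p\<in>converse R. snd p \<notin> F} \<subseteq> (\<lambda>(a,b). (b,a)) ` {p\<in>R. snd p \<notin> F}"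
    proof
      fix p assume p: "p \<in> {p\<in>converse R. snd p \<notin> F}"
      obtain a b where ab: "p = (a,b)" by (cases p)
      have "(b,a) \<in> R" "b \<notin> F" using p ab by auto
      hence "a \<notin> F" using wfR_F[OF assms, of b a] by auto
      hence "(b,a) \<in> {p\<in>R. snd p \<notin> F}" using \<open>(b,a)\<in>R\<close> by simp
      thus "p \<in> (\<lambda>(a,b). (b,a)) ` {p\<in>R. snd p \<notin> F}" unfolding ab by force
    qed
  next
    show "(\<lambda>(a,b). (b,a)) ` {p\<in>R. snd p \<notin> F} \<subseteq> {p\<in>converse R. snd p \<notin> F}"
    proof
      fix p assume "p \<in> (\<lambda>(a,b). (b,a)) ` {p\<in>R. snd p \<notin> F}"
      then obtain a b where ab: "(a,b)\<in>R" "b\<notin>F" "p = (b,a)" by auto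
      hence "a \<notin> F" using wfR_F[OF assms, of a b] by auto
      thus "p \<in> {p\<in>converse R. snd p \<notin> F}" using ab by simp
    qed
  qed
  hence "finite {p\<in>converse R. snd p \<notin> F}" using assms unfolding wfR_def by simp
  thus ?thesis using assms unfolding wfR_def monoR_conv by auto
qed

lemma J_self: "t \<notin> F \<Longrightarrow> t \<in> Jc F t"
  unfolding Jc_def by auto

lemma J_conv: assumes "z1 \<in> Jc F t" "z2 \<in> Jc F t" "z1 \<le> w" "w \<le> z2" shows "w \<in> Jc F t"
proof -
  have a1: "z1 \<notin> F" "\<forall>f\<in>F. f<t \<longleftrightarrow> f<z1" using assms(1) unfolding Jc_def by auto
  have a2: "z2 \<notin> F" "\<forall>f\<in>F. f<t \<longleftrightarrow> f<z2" using assms(2) unfolding Jc_def by auto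
  have c: "f<t \<longleftrightarrow> f<w" if f: "f\<in>F" for f
  proof
    assume "f<t" hence "f<z1" using a1 f by blast
    thus "f<w" using assms(3) by simp
  next
    assume "f<w" hence "f<z2" using assms(4) by simp
    thus "f<t" using a2 f by blast
  qed
  have "w \<notin> F"
  proof
    assume wF: "w \<in> F"
    have "\<not> w < z1" using assms(3) by simp
    hence "\<not> w < t" using a1 wF by blast
    hence "\<not> w < z2" using a2 wF by blast
    hence "w = z2" using assms(4) by simp
    thus False using a2 wF by simp
  qed
  thus ?thesis using c unfolding Jc_def by simp
qed

lemma J_nbhd: assumes "closed F" "z \<in> Jc F t" shows "\<exists>e>0. \<forall>w. z-e<w \<and> w<z+e \<longrightarrow> w \<in> Jc F t"
proof -
  have zF: "z \<notin> F" using assms(2) unfolding Jc_def by auto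
  obtain e where e: "e>0" "\<forall>w. z-e<w \<and> w<z+e \<longrightarrow> w\<notin>F" using closed_nbhd[OF assms(1) zF] by blast
  have zJ: "\<forall>f\<in>F. f<t \<longleftrightarrow> f<z" using assms(2) unfolding Jc_def by simp
  have "w \<in> Jc F t" if w: "z-e<w \<and> w<z+e" for w
  proof -
    have "min z w \<in> Jc F t"
    proof (cases "z \<le> w")
      case True thus ?thesis using assms(2) by simp
    next
      case False
      have "w \<notin> F" using e w by blast
      moreover have "\<forall>f\<in>F. f<t \<longleftrightarrow> f<w"
      proof
        fix f assume f: "f \<in> F"
        have "\<not> (w \<le> f \<and> f \<le> z)"
        proof
          assume "w \<le> f \<and> f \<le> z"
          hence "z-e<f \<and> f<z+e" using w e(1) by auto
          thus False using e(2) f by blast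
        qed
        hence "f<z \<longleftrightarrow> f<w" using False by linarith
        thus "f<t \<longleftrightarrow> f<w" using zJ f by blast
      qed
      ultimately show ?thesis using False unfolding Jc_def by simp
    qed
    moreover have "max z w \<in> Jc F t"
    proof (cases "w \<le> z")
      case True thus ?thesis using assms(2) by (simp add: max_def)
    next
      case False
      have "w \<notin> F" using e w by blast
      moreover have "\<forall>f\<in>F. f<t \<longleftrightarrow> f<w"
      proof
        fix f assume f: "f \<in> F"
        have "\<not> (z \<le> f \<and> f \<le> w)"
        proof
          assume "z \<le> f \<and> f \<le> w"
          hence "z-e<f \<and> f<z+e" using w e(1) by auto
          thus False using e(2) f by blast
        qed
        hence "f<z \<longleftrightarrow> f<w" using False by linarith
        thus "f<t \<longleftrightarrow> f<w" using zJ f by blast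
      qed
      ultimately show ?thesis using False unfolding Jc_def by (simp add: max_def)
    qed
    ultimately show ?thesis using J_conv[of "min z w" F t "max z w" w] by simp
  qed
  thus ?thesis using e(1) by blast
qed

lemma J_below:
  assumes R: "wfR F R" and p: "(x1,y1)\<in>R" "x1 < x" "y1 \<notin> Jc F x" and z: "z \<in> Jc F x"
  shows "y1 < z"
proof (cases "y1 \<in> F")
  case True
  hence "x1 = y1" using wfR_F[OF R p(1)] by simp
  thus ?thesis using True z p(2) unfolding Jc_def by auto
next
  case False
  then obtain f where f: "f\<in>F" "\<not>(f<x \<longleftrightarrow> f<y1)" using p(3) unfolding Jc_def by auto
  have ff: "(f,f)\<in>R" using R f(1) unfolding wfR_def by auto
  have "f<x1 \<longleftrightarrow> f<y1" using monoR_D[OF _ ff p(1)] R unfolding wfR_def by auto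
  hence "f<x" "y1 \<le> f" using f(2) p(2) by auto
  thus ?thesis using z f(1) unfolding Jc_def by auto
qed

lemma J_above:
  assumes R: "wfR F R" and p: "(x1,y1)\<in>R" "x < x1" "y1 \<notin> Jc F x" and z: "z \<in> Jc F x"
  shows "z < y1"
proof (cases "y1 \<in> F")
  case True
  hence "x1 = y1" using wfR_F[OF R p(1)] by simp
  have zJ: "z \<notin> F" "\<forall>f\<in>F. f<x \<longleftrightarrow> f<z" using z unfolding Jc_def by auto
  have "\<not> y1 < x" using p(2) \<open>x1 = y1\<close> by simp
  hence "\<not> y1 < z" using zJ True by blast
  moreover have "z \<noteq> y1" using zJ True by auto
  ultimately show ?thesis by simp
next
  case False
  then obtain f where f: "f\<in>F" "\<not>(f<x \<longleftrightarrow> f<y1)" using p(3) unfolding Jc_def by auto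
  have ff: "(f,f)\<in>R" using R f(1) unfolding wfR_def by auto
  have "f<x1 \<longleftrightarrow> f<y1" using monoR_D[OF _ ff p(1)] R unfolding wfR_def by auto
  hence "\<not> f<x" "f < y1" using f(2) p(2) by auto
  thus ?thesis using z f(1) unfolding Jc_def by auto
qed

lemma J_pair:
  assumes R: "wfR F R" and p: "(x1,y1)\<in>R" "x1 \<in> Jc F x"
  shows "y1 \<in> Jc F x"
proof -
  have x1F: "x1 \<notin> F" using p(2) unfolding Jc_def by auto
  have "y1 \<notin> F" using wfR_F[OF R p(1)] x1F by auto
  moreover have "\<forall>f\<in>F. f<x1 \<longleftrightarrow> f<y1"
  proof
    fix f assume f: "f\<in>F"
    have ff: "(f,f)\<in>R" using R f unfolding wfR_def by auto
    show "f<x1 \<longleftrightarrow> f<y1" using monoR_D[OF _ ff p(1)] R unfolding wfR_def by auto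
  qed
  ultimately show ?thesis using p(2) unfolding Jc_def by auto
qed

lemma Lo_fin: "wfR F R \<Longrightarrow> finite (Lo F R x)"
  unfolding wfR_def Lo_def Jc_def by (auto elim: finite_subset[rotated])

lemma Up_fin: "wfR F R \<Longrightarrow> finite (Up F R x)"
  unfolding wfR_def Up_def Jc_def by (auto elim: finite_subset[rotated])

lemma Lo_Up: "wfR F R \<Longrightarrow> p \<in> Lo F R x \<Longrightarrow> q \<in> Up F R x \<Longrightarrow> snd p < snd q"
  unfolding wfR_def Lo_def Up_def using monoR_D[of R "fst p" "snd p" "fst q" "snd q"] by auto

lemma order_ext:
  assumes R: "wfR F R" and x: "x \<notin> fst ` R" and y: "y \<in> Oset F R x"
  shows "monoR (insert (x,y) R)"
proof -
  have yJ: "y \<in> Jc F x" using y unfolding Oset_def by auto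
  have h1: "x1<x \<longrightarrow> y1<y" if p: "(x1,y1)\<in>R" for x1 y1
  proof
    assume "x1<x"
    show "y1<y"
    proof (cases "y1 \<in> Jc F x")
      case True
      hence "(x1,y1) \<in> Lo F R x" using p \<open>x1<x\<close> unfolding Lo_def by auto
      thus ?thesis using y unfolding Oset_def by auto
    next
      case False show ?thesis using J_below[OF R p \<open>x1<x\<close> False yJ] by simp
    qed
  qed
  have h2: "x<x1 \<longrightarrow> y<y1" if p: "(x1,y1)\<in>R" for x1 y1
  proof
    assume "x<x1"
    show "y<y1"
    proof (cases "y1 \<in> Jc F x")
      case True
      hence "(x1,y1) \<in> Up F R x" using p \<open>x<x1\<close> unfolding Up_def by auto
      thus ?thesis using y unfolding Oset_def by auto
    next
      case False show ?thesis using J_above[OF R p \<open>x<x1\<close> False yJ] by simp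
    qed
  qed
  have ne: "x1 \<noteq> x" if "(x1,y1)\<in>R" for x1 y1 using x that by force
  have i1: "x1<x \<longleftrightarrow> y1<y" if p: "(x1,y1)\<in>R" for x1 y1
    using h1[OF p] h2[OF p] ne[OF p] by (meson neqE order.asym)
  have i2: "x<x1 \<longleftrightarrow> y<y1" if p: "(x1,y1)\<in>R" for x1 y1
    using h1[OF p] h2[OF p] ne[OF p] by (meson neqE order.asym)
  have mR: "monoR R" using R unfolding wfR_def by auto
  show ?thesis unfolding monoR_def
  proof (intro allI impI)
    fix a b c d assume ab: "(a,b) \<in> insert (x,y) R" and cd: "(c,d) \<in> insert (x,y) R"
    show "a<c \<longleftrightarrow> b<d"
    proof (cases "(a,b) = (x,y)")
      case True
      show ?thesis
      proof (cases "(c,d) = (x,y)")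
        case True thus ?thesis using \<open>(a,b) = (x,y)\<close> by simp
      next
        case False thus ?thesis using \<open>(a,b) = (x,y)\<close> cd i2 by auto
      qed
    next
      case False
      hence abR: "(a,b) \<in> R" using ab by blast
      show ?thesis
      proof (cases "(c,d) = (x,y)")
        case True thus ?thesis using abR i1 by auto
      next
        case False thus ?thesis using abR cd monoR_D[OF mR] by auto
      qed
    qed
  qed
qed

lemma O_right:
  assumes clF: "closed F" and R: "wfR F R" and ne: "Lo F R x \<noteq> {}"
  shows "\<exists>\<eta>>0. \<forall>z. Max (snd ` Lo F R x) < z \<and> z < Max (snd ` Lo F R x) + \<eta> \<longrightarrow> z \<in> Oset F R x"
proof -
  define L where "L = Lo F R x"
  define U where "U = Up F R x"
  define yl where "yl = Max (snd ` L)"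
  have finL: "finite (snd ` L)" using Lo_fin[OF R] unfolding L_def by simp
  have finU: "finite (snd ` U)" using Up_fin[OF R] unfolding U_def by simp
  have ylin: "yl \<in> snd ` L" unfolding yl_def using finL ne unfolding L_def by (intro Max_in) auto
  have ylge: "\<forall>p\<in>L. snd p \<le> yl" unfolding yl_def using finL by auto
  have ylJ: "yl \<in> Jc F x" using ylin unfolding L_def Lo_def by auto
  obtain e where e: "e>0" "\<forall>w. yl-e<w \<and> w<yl+e \<longrightarrow> w \<in> Jc F x" using J_nbhd[OF clF ylJ] by blast
  define \<eta> where "\<eta> = (if U = {} then e else min e (Min (snd ` U) - yl))"
  have "\<eta> > 0"
  proof (cases "U = {}")
    case True thus ?thesis using e unfolding \<eta>_def by simp
  next
    case False
    have "Min (snd ` U) \<in> snd ` U" using finU False by (intro Min_in) auto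
    then obtain q where q: "q \<in> U" "snd q = Min (snd ` U)" by auto
    obtain p where p: "p \<in> L" "snd p = yl" using ylin by auto
    have "yl < Min (snd ` U)" using Lo_Up[OF R, of p x q] p q unfolding L_def U_def by simp
    thus ?thesis using e False unfolding \<eta>_def by simp
  qed
  moreover have "z \<in> Oset F R x" if z: "yl < z" "z < yl + \<eta>" for z
  proof -
    have "\<eta> \<le> e" unfolding \<eta>_def by auto
    hence "z \<in> Jc F x" using e z by auto
    moreover have "\<forall>p\<in>L. snd p < z" using ylge z by fastforce
    moreover have "\<forall>p\<in>U. z < snd p"
    proof
      fix p assume p: "p \<in> U"
      hence "U \<noteq> {}" by auto
      hence "\<eta> \<le> Min (snd ` U) - yl" unfolding \<eta>_def by simp
      moreover have "Min (snd ` U) \<le> snd p" using finU p by simp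
      ultimately show "z < snd p" using z by simp
    qed
    ultimately show ?thesis unfolding Oset_def L_def U_def by simp
  qed
  ultimately show ?thesis unfolding yl_def L_def by blast
qed

lemma O_left:
  assumes clF: "closed F" and R: "wfR F R" and ne: "Up F R x \<noteq> {}"
  shows "\<exists>\<eta>>0. \<forall>z. Min (snd ` Up F R x) - \<eta> < z \<and> z < Min (snd ` Up F R x) \<longrightarrow> z \<in> Oset F R x"
proof -
  define L where "L = Lo F R x"
  define U where "U = Up F R x"
  define yu where "yu = Min (snd ` U)"
  have finL: "finite (snd ` L)" using Lo_fin[OF R] unfolding L_def by simp
  have finU: "finite (snd ` U)" using Up_fin[OF R] unfolding U_def by simp
  have yuin: "yu \<in> snd ` U" unfolding yu_def using finU ne unfolding U_def by (intro Min_in) auto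
  have yule: "\<forall>p\<in>U. yu \<le> snd p" unfolding yu_def using finU by auto
  have yuJ: "yu \<in> Jc F x" using yuin unfolding U_def Up_def by auto
  obtain e where e: "e>0" "\<forall>w. yu-e<w \<and> w<yu+e \<longrightarrow> w \<in> Jc F x" using J_nbhd[OF clF yuJ] by blast
  define \<eta> where "\<eta> = (if L = {} then e else min e (yu - Max (snd ` L)))"
  have "\<eta> > 0"
  proof (cases "L = {}")
    case True thus ?thesis using e unfolding \<eta>_def by simp
  next
    case False
    have "Max (snd ` L) \<in> snd ` L" using finL False by (intro Max_in) auto
    then obtain q where q: "q \<in> L" "snd q = Max (snd ` L)" by auto
    obtain p where p: "p \<in> U" "snd p = yu" using yuin by auto
    have "Max (snd ` L) < yu" using Lo_Up[OF R, of q x p] p q unfolding L_def U_def by simp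
    thus ?thesis using e False unfolding \<eta>_def by simp
  qed
  moreover have "z \<in> Oset F R x" if z: "yu - \<eta> < z" "z < yu" for z
  proof -
    have "\<eta> \<le> e" unfolding \<eta>_def by auto
    hence "z \<in> Jc F x" using e z by auto
    moreover have "\<forall>p\<in>U. z < snd p" using yule z by fastforce
    moreover have "\<forall>p\<in>L. snd p < z"
    proof
      fix p assume p: "p \<in> L"
      hence "L \<noteq> {}" by auto
      hence "\<eta> \<le> yu - Max (snd ` L)" unfolding \<eta>_def by simp
      moreover have "snd p \<le> Max (snd ` L)" using finL p by simp
      ultimately show "snd p < z" using z by simp
    qed
    ultimately show ?thesis unfolding Oset_def L_def U_def by simp
  qed
  ultimately show ?thesis unfolding yu_def U_def by blast
qed

lemma O_ne:
  assumes clF: "closed F" and R: "wfR F R" and x: "x \<notin> F"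
  shows "\<exists>y0 \<delta>. \<delta> > 0 \<and> (\<forall>z. y0-\<delta><z \<and> z<y0+\<delta> \<longrightarrow> z \<in> Oset F R x)"
proof (cases "Lo F R x = {}")
  case False
  then obtain \<eta> where h: "\<eta>>0" "\<forall>z. Max (snd ` Lo F R x) < z \<and> z < Max (snd ` Lo F R x) + \<eta> \<longrightarrow> z \<in> Oset F R x"
    using O_right[OF clF R] by blast
  show ?thesis
    by (rule exI[of _ "Max (snd ` Lo F R x) + \<eta>/2"], rule exI[of _ "\<eta>/2"]) (use h in auto)
next
  case LE: True
  show ?thesis
  proof (cases "Up F R x = {}")
    case False
    then obtain \<eta> where h: "\<eta>>0" "\<forall>z. Min (snd ` Up F R x) - \<eta> < z \<and> z < Min (snd ` Up F R x) \<longrightarrow> z \<in> Oset F R x"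
      using O_left[OF clF R] by blast
    show ?thesis
      by (rule exI[of _ "Min (snd ` Up F R x) - \<eta>/2"], rule exI[of _ "\<eta>/2"]) (use h in auto)
  next
    case True
    obtain e where e: "e>0" "\<forall>w. x-e<w \<and> w<x+e \<longrightarrow> w \<in> Jc F x" using J_nbhd[OF clF J_self[OF x]] by blast
    show ?thesis using e LE True unfolding Oset_def by blast
  qed
qed

definition Pinv :: "rat set \<Rightarrow> rat set \<Rightarrow> (rat \<times> rat) set \<Rightarrow> bool" where
  "Pinv F C R \<longleftrightarrow> wfR F R \<and> (\<forall>x y. (x,y)\<in>R \<longrightarrow> y\<in>C \<longrightarrow> x \<in> F \<union> KK F) \<and>
     (\<forall>x1 y1 x2 y2. (x1,y1)\<in>R \<longrightarrow> (x2,y2)\<in>R \<longrightarrow> x1<x2 \<longrightarrow> (\<forall>w. x1<w \<and> w<x2 \<longrightarrow> w \<notin> F \<union> KK F)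
        \<longrightarrow> (\<forall>z. y1<z \<and> z<y2 \<longrightarrow> z\<notin>C))"

lemma wfR_insert:
  assumes "wfR F R" "monoR (insert (x,y) R)"
  shows "wfR F (insert (x,y) R)"
proof -
  have "{p\<in>insert (x,y) R. snd p \<notin> F} \<subseteq> insert (x,y) {p\<in>R. snd p \<notin> F}" by auto
  hence "finite {p\<in>insert (x,y) R. snd p \<notin> F}" using assms(1) unfolding wfR_def by (meson finite_insert finite_subset)
  thus ?thesis using assms unfolding wfR_def by auto
qed

lemma Pinv_insert:
  assumes P: "Pinv F C R" and m: "monoR (insert (x,y) R)"
    and G1: "y \<in> C \<longrightarrow> x \<in> F \<union> KK F"
    and G2: "\<forall>x1 y1. (x1,y1)\<in>R \<longrightarrow> x1<x \<longrightarrow> (\<forall>w. x1<w \<and> w<x \<longrightarrow> w \<notin> F \<union> KK F) \<longrightarrow> (\<forall>z. y1<z \<and> z<y \<longrightarrow> z\<notin>C)"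
    and G3: "\<forall>x2 y2. (x2,y2)\<in>R \<longrightarrow> x<x2 \<longrightarrow> (\<forall>w. x<w \<and> w<x2 \<longrightarrow> w \<notin> F \<union> KK F) \<longrightarrow> (\<forall>z. y<z \<and> z<y2 \<longrightarrow> z\<notin>C)"
  shows "Pinv F C (insert (x,y) R)"
proof -
  have R: "wfR F R" using P unfolding Pinv_def by auto
  have Cd: "\<forall>x y. (x,y)\<in>R \<longrightarrow> y\<in>C \<longrightarrow> x \<in> F \<union> KK F" using P unfolding Pinv_def by blast
  have Iv: "\<forall>x1 y1 x2 y2. (x1,y1)\<in>R \<longrightarrow> (x2,y2)\<in>R \<longrightarrow> x1<x2 \<longrightarrow> (\<forall>w. x1<w \<and> w<x2 \<longrightarrow> w \<notin> F \<union> KK F)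
        \<longrightarrow> (\<forall>z. y1<z \<and> z<y2 \<longrightarrow> z\<notin>C)" using P unfolding Pinv_def by blast
  have "wfR F (insert (x,y) R)" using wfR_insert[OF R m] .
  moreover have "\<forall>a b. (a,b)\<in>insert (x,y) R \<longrightarrow> b\<in>C \<longrightarrow> a \<in> F \<union> KK F" using Cd G1 by blast
  moreover have "\<forall>x1 y1 x2 y2. (x1,y1)\<in>insert (x,y) R \<longrightarrow> (x2,y2)\<in>insert (x,y) R \<longrightarrow> x1<x2 \<longrightarrow> (\<forall>w. x1<w \<and> w<x2 \<longrightarrow> w \<notin> F \<union> KK F)
        \<longrightarrow> (\<forall>z. y1<z \<and> z<y2 \<longrightarrow> z\<notin>C)"
  proof (intro allI impI)
    fix x1 y1 x2 y2 z
    assume a: "(x1,y1)\<in>insert (x,y) R" "(x2,y2)\<in>insert (x,y) R" "x1<x2" "\<forall>w. x1<w \<and> w<x2 \<longrightarrow> w \<notin> F \<union> KK F"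
      "y1<z \<and> z<y2"
    show "z \<notin> C"
    proof (cases "(x1,y1) = (x,y)")
      case True
      hence "(x2,y2) \<in> R" using a(1,2,3) by auto
      thus ?thesis using G3 a True by blast
    next
      case False
      hence r1: "(x1,y1) \<in> R" using a(1) by blast
      show ?thesis
      proof (cases "(x2,y2) = (x,y)")
        case True thus ?thesis using G2 a r1 by blast
      next
        case False
        hence "(x2,y2) \<in> R" using a(2) by blast
        thus ?thesis using Iv a r1 by blast
      qed
    qed
  qed
  ultimately show ?thesis unfolding Pinv_def by blast
qed

context
  fixes F C :: "rat set"
  assumes clF: "closed F" and ndF: "nowhere_dense F" and clC: "closed C" and ndC: "nowhere_dense C"
begin

lemma Bnz:
  assumes "x1 < x2" "x1 \<in> F \<union> KK F \<or> x2 \<in> F \<union> KK F"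
  shows "\<exists>w. x1<w \<and> w<x2 \<and> w \<in> F \<union> KK F"
proof -
  have d: "x2 - x1 > 0" using assms(1) by simp
  consider "x1 \<in> KK F" | "x2 \<in> KK F" | "x1 \<in> F" | "x2 \<in> F" using assms(2) by blast
  thus ?thesis
  proof cases
    case 1
    have h: "\<forall>e>0. (\<exists>w\<in>KK F. x1<w \<and> w<x1+e) \<and> (\<exists>w\<in>KK F. x1-e<w \<and> w<x1)"
      using K_TS[OF clF 1] unfolding TS_def .
    obtain w where "w \<in> KK F" "x1 < w" "w < x1 + (x2 - x1)" using h[rule_format, OF d] by blast
    thus ?thesis by auto
  next
    case 2
    have h: "\<forall>e>0. (\<exists>w\<in>KK F. x2<w \<and> w<x2+e) \<and> (\<exists>w\<in>KK F. x2-e<w \<and> w<x2)"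
      using K_TS[OF clF 2] unfolding TS_def .
    obtain w where "w \<in> KK F" "x2 - (x2 - x1) < w" "w < x2" using h[rule_format, OF d] by blast
    thus ?thesis by auto
  next
    case 3
    show ?thesis
    proof (cases "\<exists>w\<in>F. x1<w \<and> w<x2")
      case True thus ?thesis by blast
    next
      case False
      define z where "z = (x1+x2)/2"
      have z: "x1 < z" "z < x2" using assms(1) unfolding z_def by (simp_all add: field_simps)
      hence zF: "z \<notin> F" using False by blast
      obtain k where k: "k \<in> KK F" "k < z" "\<forall>w. k \<le> w \<and> w \<le> z \<longrightarrow> w \<notin> F" using K_lower[OF clF zF] by blast
      have "x1 < k"
      proof (rule ccontr)
        assume "\<not> x1 < k"
        hence "k \<le> x1 \<and> x1 \<le> z" using z by simp
        thus False using k(3) 3 by blast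
      qed
      thus ?thesis using k z by (intro exI[of _ k]) auto
    qed
  next
    case 4
    show ?thesis
    proof (cases "\<exists>w\<in>F. x1<w \<and> w<x2")
      case True thus ?thesis by blast
    next
      case False
      define z where "z = (x1+x2)/2"
      have z: "x1 < z" "z < x2" using assms(1) unfolding z_def by (simp_all add: field_simps)
      hence zF: "z \<notin> F" using False by blast
      obtain k where k: "k \<in> KK F" "z < k" "\<forall>w. z \<le> w \<and> w \<le> k \<longrightarrow> w \<notin> F" using K_upper[OF clF zF] by blast
      have "k < x2"
      proof (rule ccontr)
        assume "\<not> k < x2"
        hence "z \<le> x2 \<and> x2 \<le> k" using z by simp
        thus False using k(3) 4 by blast
      qed
      thus ?thesis using k z by (intro exI[of _ k]) auto
    qed
  qed
qed

lemma Pinv_init: "Pinv F C ((\<lambda>f. (f,f)) ` F)"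
proof -
  have "monoR ((\<lambda>f. (f,f)) ` F)" unfolding monoR_def by auto
  moreover have "{p\<in>(\<lambda>f. (f,f)) ` F. snd p \<notin> F} = {}"
  proof (rule equals0I)
    fix p assume "p \<in> {p\<in>(\<lambda>f. (f,f)) ` F. snd p \<notin> F}"
    then obtain f where "f\<in>F" "p = (f,f)" "snd p \<notin> F" by blast
    thus False by simp
  qed
  hence "finite {p\<in>(\<lambda>f. (f,f)) ` F. snd p \<notin> F}" by (simp only: finite.emptyI)
  moreover have "\<forall>f\<in>F. (f,f) \<in> (\<lambda>f. (f,f)) ` F" by blast
  ultimately have "wfR F ((\<lambda>f. (f,f)) ` F)" unfolding wfR_def by (intro conjI)
  moreover have "\<forall>x y. (x,y)\<in>(\<lambda>f. (f,f)) ` F \<longrightarrow> y\<in>C \<longrightarrow> x \<in> F \<union> KK F" by auto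
  moreover have "\<forall>x1 y1 x2 y2. (x1,y1)\<in>(\<lambda>f. (f,f)) ` F \<longrightarrow> (x2,y2)\<in>(\<lambda>f. (f,f)) ` F \<longrightarrow> x1<x2 \<longrightarrow> (\<forall>w. x1<w \<and> w<x2 \<longrightarrow> w \<notin> F \<union> KK F)
        \<longrightarrow> (\<forall>z. y1<z \<and> z<y2 \<longrightarrow> z\<notin>C)"
  proof (intro allI impI)
    fix x1 y1 x2 y2 z
    assume a: "(x1,y1)\<in>(\<lambda>f. (f,f)) ` F" "(x2,y2)\<in>(\<lambda>f. (f,f)) ` F" "x1<x2" "\<forall>w. x1<w \<and> w<x2 \<longrightarrow> w \<notin> F \<union> KK F"
    have "x1 \<in> F" using a(1) by auto
    then obtain w where "x1<w \<and> w<x2 \<and> w \<in> F \<union> KK F" using Bnz[OF a(3)] by blast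
    thus "z \<notin> C" using a(4) by blast
  qed
  ultimately show ?thesis unfolding Pinv_def by (intro conjI)
qed

end

context
  fixes F C :: "rat set"
  assumes clF: "closed F" and ndF: "nowhere_dense F" and clC: "closed C" and ndC: "nowhere_dense C"
begin

lemmas Bz = Bnz[OF clF ndF clC ndC]

lemma forth_P:
  assumes P: "Pinv F C R"
  shows "\<exists>y. Pinv F C (insert (x,y) R)"
proof (cases "x \<in> fst ` R")
  case True
  then obtain y where "(x,y) \<in> R" by force
  hence "insert (x,y) R = R" by blast
  thus ?thesis using P by metis
next
  case False
  define B where "B = F \<union> KK F"
  have R: "wfR F R" using P unfolding Pinv_def by auto
  have mR: "monoR R" using R unfolding wfR_def by auto
  have Cd: "\<And>a b. (a,b)\<in>R \<Longrightarrow> b\<in>C \<Longrightarrow> a \<in> B" using P unfolding Pinv_def B_def by blast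
  have Iv: "\<And>x1 y1 x2 y2 z. (x1,y1)\<in>R \<Longrightarrow> (x2,y2)\<in>R \<Longrightarrow> x1<x2 \<Longrightarrow> (\<forall>w. x1<w \<and> w<x2 \<longrightarrow> w \<notin> B)
        \<Longrightarrow> y1<z \<Longrightarrow> z<y2 \<Longrightarrow> z\<notin>C" using P unfolding Pinv_def B_def by blast
  have Bz': "\<And>a b. a<b \<Longrightarrow> a\<in>B \<or> b\<in>B \<Longrightarrow> \<exists>w. a<w \<and> w<b \<and> w\<in>B" using Bz unfolding B_def by blast
  have xF: "x \<notin> F"
  proof
    assume "x \<in> F"
    hence "(x,x) \<in> R" using R unfolding wfR_def by auto
    thus False using False by force
  qed
  define L where "L = Lo F R x"
  define U where "U = Up F R x"
  define Os where "Os = Oset F R x"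
  define yl where "yl = Max (snd ` L)"
  define xl where "xl = (SOME a. (a,yl)\<in>L)"
  define yu where "yu = Min (snd ` U)"
  define xu where "xu = (SOME a. (a,yu)\<in>U)"
  have finL: "finite (snd ` L)" using Lo_fin[OF R] unfolding L_def by simp
  have finU: "finite (snd ` U)" using Up_fin[OF R] unfolding U_def by simp
  have Lprop: "(xl,yl) \<in> L \<and> (\<forall>p\<in>L. snd p \<le> yl)" if ne: "L \<noteq> {}"
  proof -
    have "yl \<in> snd ` L" unfolding yl_def using finL ne by (intro Max_in) auto
    hence "\<exists>a. (a,yl)\<in>L" by force
    hence "(xl,yl) \<in> L" unfolding xl_def by (rule someI_ex)
    moreover have "\<forall>p\<in>L. snd p \<le> yl" unfolding yl_def using finL by auto
    ultimately show ?thesis by blast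
  qed
  have Uprop: "(xu,yu) \<in> U \<and> (\<forall>p\<in>U. yu \<le> snd p)" if ne: "U \<noteq> {}"
  proof -
    have "yu \<in> snd ` U" unfolding yu_def using finU ne by (intro Min_in) auto
    hence "\<exists>a. (a,yu)\<in>U" by force
    hence "(xu,yu) \<in> U" unfolding xu_def by (rule someI_ex)
    moreover have "\<forall>p\<in>U. yu \<le> snd p" unfolding yu_def using finU by auto
    ultimately show ?thesis by blast
  qed
  define CL where "CL = (\<forall>w. xl<w \<and> w<x \<longrightarrow> w \<notin> B)"
  define CU where "CU = (\<forall>w. x<w \<and> w<xu \<longrightarrow> w \<notin> B)"
  have inJ1: "x1 \<in> Jc F x" if h1: "x1 < x" and h2: "\<forall>w. x1<w \<and> w<x \<longrightarrow> w \<notin> B" for x1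
  proof -
    have "x1 \<notin> B"
    proof
      assume "x1 \<in> B"
      then obtain w where "x1<w \<and> w<x \<and> w\<in>B" using Bz'[OF h1] by blast
      thus False using h2 by blast
    qed
    hence "x1 \<notin> F" unfolding B_def by simp
    moreover have "\<forall>f\<in>F. f<x \<longleftrightarrow> f<x1"
    proof
      fix f assume f: "f \<in> F"
      show "f<x \<longleftrightarrow> f<x1"
      proof
        assume fx: "f<x"
        show "f<x1"
        proof (rule ccontr)
          assume "\<not> f<x1"
          moreover have "f \<noteq> x1" using f \<open>x1\<notin>F\<close> by auto
          ultimately have "x1<f" by simp
          thus False using h2 fx f unfolding B_def by blast
        qed
      next
        assume "f<x1" thus "f<x" using h1 by simp
      qed
    qed
    ultimately show ?thesis unfolding Jc_def by simp
  qed
  have inJ2: "x2 \<in> Jc F x" if h1: "x < x2" and h2: "\<forall>w. x<w \<and> w<x2 \<longrightarrow> w \<notin> B" for x2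
  proof -
    have "x2 \<notin> B"
    proof
      assume "x2 \<in> B"
      then obtain w where "x<w \<and> w<x2 \<and> w\<in>B" using Bz'[OF h1] by blast
      thus False using h2 by blast
    qed
    hence "x2 \<notin> F" unfolding B_def by simp
    moreover have "\<forall>f\<in>F. f<x \<longleftrightarrow> f<x2"
    proof
      fix f assume f: "f \<in> F"
      show "f<x \<longleftrightarrow> f<x2"
      proof
        assume "f<x" thus "f<x2" using h1 by simp
      next
        assume fx: "f<x2"
        show "f<x"
        proof (rule ccontr)
          assume "\<not> f<x"
          moreover have "f \<noteq> x" using f xF by auto
          ultimately have "x<f" by simp
          thus False using h2 fx f unfolding B_def by blast
        qed
      qed
    qed
    ultimately show ?thesis unfolding Jc_def by simp
  qed
  have G2I: "\<forall>x1 y1. (x1,y1)\<in>R \<longrightarrow> x1<x \<longrightarrow> (\<forall>w. x1<w \<and> w<x \<longrightarrow> w \<notin> B) \<longrightarrow> (\<forall>z. y1<z \<and> z<y \<longrightarrow> z\<notin>C)"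
    if H: "L \<noteq> {} \<Longrightarrow> CL \<Longrightarrow> \<forall>z. yl<z \<and> z<y \<longrightarrow> z\<notin>C" for y
  proof (intro allI impI)
    fix x1 y1 z assume p: "(x1,y1)\<in>R" and x1x: "x1<x" and free: "\<forall>w. x1<w \<and> w<x \<longrightarrow> w \<notin> B"
      and z: "y1<z \<and> z<y"
    have "x1 \<in> Jc F x" using inJ1[OF x1x free] .
    hence "y1 \<in> Jc F x" using J_pair[OF R p] by blast
    hence inL: "(x1,y1) \<in> L" using p x1x unfolding L_def Lo_def by simp
    hence ne: "L \<noteq> {}" by auto
    have lp: "(xl,yl) \<in> L" "\<forall>p\<in>L. snd p \<le> yl" using Lprop[OF ne] by auto
    have xlR: "(xl,yl)\<in>R" "xl < x" using lp(1) unfolding L_def Lo_def by auto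
    have y1yl: "y1 \<le> yl" using lp(2) inL by fastforce
    have "x1 \<le> xl"
    proof (rule ccontr)
      assume "\<not> x1 \<le> xl"
      hence "yl < y1" using monoR_D[OF mR xlR(1) p] by simp
      thus False using y1yl by simp
    qed
    hence cl: CL unfolding CL_def using free by auto
    show "z \<notin> C"
    proof (cases "z < yl")
      case True
      hence "y1 < yl" using z by simp
      hence "x1 < xl" using monoR_D[OF mR p xlR(1)] by simp
      moreover have "\<forall>w. x1<w \<and> w<xl \<longrightarrow> w \<notin> B" using free xlR(2) by auto
      ultimately show ?thesis using Iv[OF p xlR(1)] z True by blast
    next
      case False
      show ?thesis
      proof (cases "z = yl")
        case True
        have "xl \<notin> B"
        proof
          assume "xl \<in> B"
          then obtain w where "xl<w \<and> w<x \<and> w\<in>B" using Bz'[OF xlR(2)] by blast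
          thus False using cl unfolding CL_def by blast
        qed
        thus ?thesis using Cd[OF xlR(1)] True by blast
      next
        case False
        hence "yl < z" using \<open>\<not> z < yl\<close> by simp
        thus ?thesis using H[OF ne cl] z by blast
      qed
    qed
  qed
  have G3I: "\<forall>x2 y2. (x2,y2)\<in>R \<longrightarrow> x<x2 \<longrightarrow> (\<forall>w. x<w \<and> w<x2 \<longrightarrow> w \<notin> B) \<longrightarrow> (\<forall>z. y<z \<and> z<y2 \<longrightarrow> z\<notin>C)"
    if H: "U \<noteq> {} \<Longrightarrow> CU \<Longrightarrow> \<forall>z. y<z \<and> z<yu \<longrightarrow> z\<notin>C" for y
  proof (intro allI impI)
    fix x2 y2 z assume p: "(x2,y2)\<in>R" and x2x: "x<x2" and free: "\<forall>w. x<w \<and> w<x2 \<longrightarrow> w \<notin> B"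
      and z: "y<z \<and> z<y2"
    have "x2 \<in> Jc F x" using inJ2[OF x2x free] .
    hence "y2 \<in> Jc F x" using J_pair[OF R p] by blast
    hence inU: "(x2,y2) \<in> U" using p x2x unfolding U_def Up_def by simp
    hence ne: "U \<noteq> {}" by auto
    have up: "(xu,yu) \<in> U" "\<forall>p\<in>U. yu \<le> snd p" using Uprop[OF ne] by auto
    have xuR: "(xu,yu)\<in>R" "x < xu" using up(1) unfolding U_def Up_def by auto
    have y2yu: "yu \<le> y2" using up(2) inU by fastforce
    have "xu \<le> x2"
    proof (rule ccontr)
      assume "\<not> xu \<le> x2"
      hence "y2 < yu" using monoR_D[OF mR p xuR(1)] by simp
      thus False using y2yu by simp
    qed
    hence cu: CU unfolding CU_def using free by auto
    show "z \<notin> C"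
    proof (cases "yu < z")
      case True
      hence "yu < y2" using z by simp
      hence "xu < x2" using monoR_D[OF mR xuR(1) p] by simp
      moreover have "\<forall>w. xu<w \<and> w<x2 \<longrightarrow> w \<notin> B" using free xuR(2) by auto
      ultimately show ?thesis using Iv[OF xuR(1) p] z True by blast
    next
      case False
      show ?thesis
      proof (cases "z = yu")
        case True
        have "xu \<notin> B"
        proof
          assume "xu \<in> B"
          then obtain w where "x<w \<and> w<xu \<and> w\<in>B" using Bz'[OF xuR(2)] by blast
          thus False using cu unfolding CU_def by blast
        qed
        thus ?thesis using Cd[OF xuR(1)] True by blast
      next
        case False
        hence "z < yu" using \<open>\<not> yu < z\<close> by simp
        thus ?thesis using H[OF ne cu] z by blast
      qed
    qed
  qed
  have fin: "\<exists>y. Pinv F C (insert (x,y) R)"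
    if yO: "y \<in> Os" and g1: "x \<notin> B \<longrightarrow> y \<notin> C"
      and H2: "L \<noteq> {} \<Longrightarrow> CL \<Longrightarrow> \<forall>z. yl<z \<and> z<y \<longrightarrow> z\<notin>C"
      and H3: "U \<noteq> {} \<Longrightarrow> CU \<Longrightarrow> \<forall>z. y<z \<and> z<yu \<longrightarrow> z\<notin>C" for y
  proof -
    have m: "monoR (insert (x,y) R)" using order_ext[OF R False] yO unfolding Os_def by blast
    have "Pinv F C (insert (x,y) R)"
      using Pinv_insert[OF P m] g1 G2I[OF H2] G3I[OF H3] unfolding B_def by blast
    thus ?thesis by blast
  qed
  have xlR: "(xl,yl)\<in>R \<and> xl < x \<and> yl \<in> Jc F x" if "L \<noteq> {}"
    using Lprop[OF that] unfolding L_def Lo_def by auto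
  have xuR: "(xu,yu)\<in>R \<and> x < xu \<and> yu \<in> Jc F x" if "U \<noteq> {}"
    using Uprop[OF that] unfolding U_def Up_def by auto
  have notCL: "\<not> CL" if h1: "x \<in> B" and h2: "L \<noteq> {}"
  proof
    assume CL
    obtain w where "xl<w \<and> w<x \<and> w\<in>B" using Bz'[of xl x] xlR[OF h2] h1 by blast
    thus False using \<open>CL\<close> unfolding CL_def by blast
  qed
  have notCU: "\<not> CU" if h1: "x \<in> B" and h2: "U \<noteq> {}"
  proof
    assume CU
    obtain w where "x<w \<and> w<xu \<and> w\<in>B" using Bz'[of x xu] xuR[OF h2] h1 by blast
    thus False using \<open>CU\<close> unfolding CU_def by blast
  qed
  have ylC: "yl \<notin> C" if h1: "L \<noteq> {}" and h2: CL
  proof -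
    have "xl \<notin> B"
    proof
      assume "xl \<in> B"
      obtain w where "xl<w \<and> w<x \<and> w\<in>B" using Bz'[of xl x] xlR[OF h1] \<open>xl \<in> B\<close> by blast
      thus False using h2 unfolding CL_def by blast
    qed
    thus ?thesis using Cd xlR[OF h1] by blast
  qed
  have yuC: "yu \<notin> C" if h1: "U \<noteq> {}" and h2: CU
  proof -
    have "xu \<notin> B"
    proof
      assume "xu \<in> B"
      obtain w where "x<w \<and> w<xu \<and> w\<in>B" using Bz'[of x xu] xuR[OF h1] \<open>xu \<in> B\<close> by blast
      thus False using h2 unfolding CU_def by blast
    qed
    thus ?thesis using Cd xuR[OF h1] by blast
  qed
  obtain y0 \<delta> where y0: "\<delta> > 0" "\<forall>z. y0-\<delta><z \<and> z<y0+\<delta> \<longrightarrow> z \<in> Os"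
    using O_ne[OF clF R xF] unfolding Os_def by blast
  show ?thesis
  proof (cases "x \<in> B")
    case True
    have "y0 \<in> Os" using y0 by simp
    thus ?thesis using fin[of y0] True notCL notCU by blast
  next
    case xB: False
    show ?thesis
    proof (cases "L \<noteq> {} \<and> CL")
      case cl: True
      show ?thesis
      proof (cases "U \<noteq> {} \<and> CU")
        case cu: True
        have a: "(xl,yl)\<in>R" "xl < x" "yl \<in> Jc F x" using xlR cl by auto
        have b: "(xu,yu)\<in>R" "x < xu" "yu \<in> Jc F x" using xuR cu by auto
        have free: "\<forall>w. xl<w \<and> w<xu \<longrightarrow> w \<notin> B"
        proof (intro allI impI)
          fix w assume w: "xl<w \<and> w<xu"
          consider "w<x" | "w=x" | "x<w" by linarith
          thus "w \<notin> B" using cl cu w xB unfolding CL_def CU_def by cases auto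
        qed
        have Cfree: "\<forall>z. yl<z \<and> z<yu \<longrightarrow> z \<notin> C" using Iv[OF a(1) b(1)] a(2) b(2) free by auto
        have "yl < yu" using monoR_D[OF mR a(1) b(1)] a(2) b(2) by simp
        define y where "y = (yl+yu)/2"
        have yy: "yl < y" "y < yu" using \<open>yl<yu\<close> unfolding y_def by (simp_all add: field_simps)
        have "y \<in> Jc F x" using J_conv[OF a(3) b(3)] yy by simp
        moreover have "\<forall>p\<in>L. snd p < y" using Lprop cl yy by fastforce
        moreover have "\<forall>p\<in>U. y < snd p" using Uprop cu yy by fastforce
        ultimately have "y \<in> Os" unfolding Os_def Oset_def L_def U_def by simp
        moreover have "y \<notin> C" using Cfree yy by blast
        moreover have "\<forall>z. yl<z \<and> z<y \<longrightarrow> z\<notin>C" "\<forall>z. y<z \<and> z<yu \<longrightarrow> z\<notin>C" using Cfree yy by auto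
        ultimately show ?thesis using fin[of y] by blast
      next
        case cu: False
        obtain e1 where e1: "e1>0" "\<forall>z. yl-e1<z \<and> z<yl+e1 \<longrightarrow> z\<notin>C"
          using closed_nbhd[OF clC ylC] cl by blast
        obtain \<eta> where eta: "\<eta>>0" "\<forall>z. yl < z \<and> z < yl + \<eta> \<longrightarrow> z \<in> Os"
          using O_right[OF clF R, of x] cl unfolding Os_def yl_def L_def by blast
        define y where "y = yl + min e1 \<eta> / 2"
        have yy: "yl < y" "y < yl + e1" "y < yl + \<eta>" using e1(1) eta(1) unfolding y_def by (simp_all add: min_def)
        have "y \<in> Os" using eta(2) yy by simp
        moreover have "y \<notin> C" using e1 yy by simp
        moreover have "\<forall>z. yl<z \<and> z<y \<longrightarrow> z\<notin>C" using e1 yy by auto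
        ultimately show ?thesis using fin[of y] cu by blast
      qed
    next
      case cl: False
      show ?thesis
      proof (cases "U \<noteq> {} \<and> CU")
        case cu: True
        obtain e1 where e1: "e1>0" "\<forall>z. yu-e1<z \<and> z<yu+e1 \<longrightarrow> z\<notin>C"
          using closed_nbhd[OF clC yuC] cu by blast
        obtain \<eta> where eta: "\<eta>>0" "\<forall>z. yu - \<eta> < z \<and> z < yu \<longrightarrow> z \<in> Os"
          using O_left[OF clF R, of x] cu unfolding Os_def yu_def U_def by blast
        define y where "y = yu - min e1 \<eta> / 2"
        have yy: "y < yu" "yu - e1 < y" "yu - \<eta> < y" using e1(1) eta(1) unfolding y_def by (simp_all add: min_def)
        have "y \<in> Os" using eta(2) yy by simp
        moreover have "y \<notin> C" using e1 yy by simp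
        moreover have "\<forall>z. y<z \<and> z<yu \<longrightarrow> z\<notin>C" using e1 yy by auto
        ultimately show ?thesis using fin[of y] cl by blast
      next
        case cu: False
        have "y0-\<delta> < y0+\<delta>" using y0(1) by simp
        then obtain p q where pq: "y0-\<delta>\<le>p" "p<q" "q\<le>y0+\<delta>" "\<forall>z. p<z\<and>z<q \<longrightarrow> z\<notin>C"
          using nd_imp[OF ndC] by blast
        define y where "y = (p+q)/2"
        have yy: "p < y" "y < q" using pq(2) unfolding y_def by (simp_all add: field_simps)
        have "y \<in> Os" using y0(2) yy pq by simp
        moreover have "y \<notin> C" using pq(4) yy by blast
        ultimately show ?thesis using fin[of y] cl cu by blast
      qed
    qed
  qed
qed

lemma back_P:
  assumes P: "Pinv F C R"
  shows "\<exists>x. Pinv F C (insert (x,y) R)"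
proof (cases "y \<in> snd ` R")
  case True
  then obtain x where "(x,y) \<in> R" by force
  hence "insert (x,y) R = R" by blast
  thus ?thesis using P by metis
next
  case False
  define B where "B = F \<union> KK F"
  have R: "wfR F R" using P unfolding Pinv_def by auto
  have mR: "monoR R" using R unfolding wfR_def by auto
  have Cd: "\<And>a b. (a,b)\<in>R \<Longrightarrow> b\<in>C \<Longrightarrow> a \<in> B" using P unfolding Pinv_def B_def by blast
  have Iv: "\<And>x1 y1 x2 y2 z. (x1,y1)\<in>R \<Longrightarrow> (x2,y2)\<in>R \<Longrightarrow> x1<x2 \<Longrightarrow> (\<forall>w. x1<w \<and> w<x2 \<longrightarrow> w \<notin> B)
        \<Longrightarrow> y1<z \<Longrightarrow> z<y2 \<Longrightarrow> z\<notin>C" using P unfolding Pinv_def B_def by blast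
  have Bz': "\<And>a b. a<b \<Longrightarrow> a\<in>B \<or> b\<in>B \<Longrightarrow> \<exists>w. a<w \<and> w<b \<and> w\<in>B" using Bz unfolding B_def by blast
  have yF: "y \<notin> F"
  proof
    assume "y \<in> F"
    hence "(y,y) \<in> R" using R unfolding wfR_def by auto
    thus False using False by force
  qed
  define R' where "R' = converse R"
  have R': "wfR F R'" unfolding R'_def using wfR_conv[OF R] .
  have yR': "y \<notin> fst ` R'" using False unfolding R'_def by force
  define L where "L = Lo F R' y"
  define U where "U = Up F R' y"
  define Os where "Os = Oset F R' y"
  have fin: "\<exists>x. Pinv F C (insert (x,y) R)"
    if xO: "x \<in> Os" and g1: "y \<in> C \<longrightarrow> x \<in> B"
      and G2: "\<forall>x1 y1. (x1,y1)\<in>R \<longrightarrow> x1<x \<longrightarrow> (\<forall>w. x1<w \<and> w<x \<longrightarrow> w \<notin> B) \<longrightarrow> (\<forall>z. y1<z \<and> z<y \<longrightarrow> z\<notin>C)"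
      and G3: "\<forall>x2 y2. (x2,y2)\<in>R \<longrightarrow> x<x2 \<longrightarrow> (\<forall>w. x<w \<and> w<x2 \<longrightarrow> w \<notin> B) \<longrightarrow> (\<forall>z. y<z \<and> z<y2 \<longrightarrow> z\<notin>C)"
    for x
  proof -
    have "monoR (insert (y,x) R')" using order_ext[OF R' yR'] xO unfolding Os_def by blast
    moreover have "insert (x,y) R = converse (insert (y,x) R')" unfolding R'_def by auto
    ultimately have m: "monoR (insert (x,y) R)" using monoR_conv by metis
    have "Pinv F C (insert (x,y) R)"
      using Pinv_insert[OF P m] g1 G2 G3 unfolding B_def by blast
    thus ?thesis by blast
  qed
  show ?thesis
  proof (cases "\<exists>x\<in>Os. x \<in> B")
    case True
    then obtain x where x: "x \<in> Os" "x \<in> B" by blast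
    have G2: "\<forall>x1 y1. (x1,y1)\<in>R \<longrightarrow> x1<x \<longrightarrow> (\<forall>w. x1<w \<and> w<x \<longrightarrow> w \<notin> B) \<longrightarrow> (\<forall>z. y1<z \<and> z<y \<longrightarrow> z\<notin>C)"
    proof (intro allI impI)
      fix x1 y1 z assume "(x1,y1)\<in>R" and h: "x1<x" "\<forall>w. x1<w \<and> w<x \<longrightarrow> w \<notin> B"
      obtain w where "x1<w \<and> w<x \<and> w\<in>B" using Bz'[OF h(1)] x(2) by blast
      thus "z \<notin> C" using h(2) by blast
    qed
    have G3: "\<forall>x2 y2. (x2,y2)\<in>R \<longrightarrow> x<x2 \<longrightarrow> (\<forall>w. x<w \<and> w<x2 \<longrightarrow> w \<notin> B) \<longrightarrow> (\<forall>z. y<z \<and> z<y2 \<longrightarrow> z\<notin>C)"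
    proof (intro allI impI)
      fix x2 y2 z assume "(x2,y2)\<in>R" and h: "x<x2" "\<forall>w. x<w \<and> w<x2 \<longrightarrow> w \<notin> B"
      obtain w where "x<w \<and> w<x2 \<and> w\<in>B" using Bz'[OF h(1)] x(2) by blast
      thus "z \<notin> C" using h(2) by blast
    qed
    show ?thesis using fin[OF x(1) _ G2 G3] x(2) by blast
  next
    case nB: False
    obtain y0 \<delta> where y0: "\<delta> > 0" "\<forall>z. y0-\<delta><z \<and> z<y0+\<delta> \<longrightarrow> z \<in> Os"
      using O_ne[OF clF R' yF] unfolding Os_def by blast
    have y0O: "y0 \<in> Os" using y0 by simp
    hence y0J: "y0 \<in> Jc F y" unfolding Os_def Oset_def by simp
    hence y0F: "y0 \<notin> F" unfolding Jc_def by simp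
    have finL: "finite (snd ` L)" using Lo_fin[OF R'] unfolding L_def by simp
    have finU: "finite (snd ` U)" using Up_fin[OF R'] unfolding U_def by simp
    have Une: "U \<noteq> {}"
    proof
      assume Ue: "U = {}"
      obtain k where k: "k \<in> KK F" "y0 < k" "\<forall>w. y0 \<le> w \<and> w \<le> k \<longrightarrow> w \<notin> F"
        using K_upper[OF clF y0F] by blast
      have "k \<notin> F" using k by auto
      moreover have "\<forall>f\<in>F. f<y \<longleftrightarrow> f<k"
      proof
        fix f assume f: "f\<in>F"
        have "f<y \<longleftrightarrow> f<y0" using y0J f unfolding Jc_def by auto
        moreover have "f<y0 \<longleftrightarrow> f<k"
        proof
          assume "f<y0" thus "f<k" using k(2) by simp
        next
          assume fk: "f<k"
          show "f<y0"
          proof (rule ccontr)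
            assume "\<not> f<y0"
            thus False using k(3) f fk by auto
          qed
        qed
        ultimately show "f<y \<longleftrightarrow> f<k" by simp
      qed
      ultimately have "k \<in> Jc F y" unfolding Jc_def by simp
      moreover have "\<forall>p\<in>L. snd p < k" using y0O k(2) unfolding Os_def Oset_def L_def by force
      ultimately have "k \<in> Os" using Ue unfolding Os_def Oset_def L_def U_def by simp
      thus False using nB k(1) unfolding B_def by blast
    qed
    have Lne: "L \<noteq> {}"
    proof
      assume Le: "L = {}"
      obtain k where k: "k \<in> KK F" "k < y0" "\<forall>w. k \<le> w \<and> w \<le> y0 \<longrightarrow> w \<notin> F"
        using K_lower[OF clF y0F] by blast
      have "k \<notin> F" using k by auto
      moreover have "\<forall>f\<in>F. f<y \<longleftrightarrow> f<k"
      proof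
        fix f assume f: "f\<in>F"
        have "f<y \<longleftrightarrow> f<y0" using y0J f unfolding Jc_def by auto
        moreover have "f<y0 \<longleftrightarrow> f<k"
        proof
          assume fy: "f<y0"
          show "f<k"
          proof (rule ccontr)
            assume "\<not> f<k"
            thus False using k(3) f fy by auto
          qed
        next
          assume "f<k" thus "f<y0" using k(2) by simp
        qed
        ultimately show "f<y \<longleftrightarrow> f<k" by simp
      qed
      ultimately have "k \<in> Jc F y" unfolding Jc_def by simp
      moreover have "\<forall>p\<in>U. k < snd p" using y0O k(2) unfolding Os_def Oset_def U_def by force
      ultimately have "k \<in> Os" using Le unfolding Os_def Oset_def L_def U_def by simp
      thus False using nB k(1) unfolding B_def by blast
    qed
    define xl where "xl = Max (snd ` L)"
    define yl where "yl = (SOME b. (b,xl)\<in>L)"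
    define xu where "xu = Min (snd ` U)"
    define yu where "yu = (SOME b. (b,xu)\<in>U)"
    have "xl \<in> snd ` L" unfolding xl_def using finL Lne by (intro Max_in) auto
    hence "\<exists>b. (b,xl)\<in>L" by force
    hence lp: "(yl,xl) \<in> L" unfolding yl_def by (rule someI_ex)
    have lge: "\<forall>p\<in>L. snd p \<le> xl" unfolding xl_def using finL by auto
    have "xu \<in> snd ` U" unfolding xu_def using finU Une by (intro Min_in) auto
    hence "\<exists>b. (b,xu)\<in>U" by force
    hence up: "(yu,xu) \<in> U" unfolding yu_def by (rule someI_ex)
    have ule: "\<forall>p\<in>U. xu \<le> snd p" unfolding xu_def using finU by auto
    have a: "(xl,yl)\<in>R" "yl < y" "xl \<in> Jc F y" using lp unfolding L_def Lo_def R'_def by auto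
    have b: "(xu,yu)\<in>R" "y < yu" "xu \<in> Jc F y" using up unfolding U_def Up_def R'_def by auto
    have xlu: "xl < xu" using Lo_Up[OF R' lp[unfolded L_def] up[unfolded U_def]] by simp
    have inO: "w \<in> Os" if w: "xl < w" "w < xu" for w
    proof -
      have "w \<in> Jc F y" using J_conv[OF a(3) b(3)] w by simp
      moreover have "\<forall>p\<in>L. snd p < w" using lge w by fastforce
      moreover have "\<forall>p\<in>U. w < snd p" using ule w by fastforce
      ultimately show ?thesis unfolding Os_def Oset_def L_def U_def by simp
    qed
    have freeO: "\<forall>w. xl<w \<and> w<xu \<longrightarrow> w \<notin> B" using inO nB by blast
    have yC: "y \<notin> C" using Iv[OF a(1) b(1) xlu freeO] a(2) b(2) by blast
    define x where "x = (xl+xu)/2"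
    have xx: "xl < x" "x < xu" using xlu unfolding x_def by (simp_all add: field_simps)
    have xO: "x \<in> Os" using inO xx by simp
    have xB: "x \<notin> B" using freeO xx by blast
    have G2: "\<forall>x1 y1. (x1,y1)\<in>R \<longrightarrow> x1<x \<longrightarrow> (\<forall>w. x1<w \<and> w<x \<longrightarrow> w \<notin> B) \<longrightarrow> (\<forall>z. y1<z \<and> z<y \<longrightarrow> z\<notin>C)"
    proof (intro allI impI)
      fix x1 y1 z assume p: "(x1,y1)\<in>R" and h: "x1<x" "\<forall>w. x1<w \<and> w<x \<longrightarrow> w \<notin> B" and z: "y1<z \<and> z<y"
      have "\<forall>w. x1<w \<and> w<xu \<longrightarrow> w \<notin> B"
      proof (intro allI impI)
        fix w assume w: "x1<w \<and> w<xu"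
        consider "w<x" | "w=x" | "x<w" by linarith
        thus "w \<notin> B" using h w xB freeO xx by cases auto
      qed
      moreover have "x1 < xu" using h(1) xx by simp
      ultimately show "z \<notin> C" using Iv[OF p b(1)] z b(2) by auto
    qed
    have G3: "\<forall>x2 y2. (x2,y2)\<in>R \<longrightarrow> x<x2 \<longrightarrow> (\<forall>w. x<w \<and> w<x2 \<longrightarrow> w \<notin> B) \<longrightarrow> (\<forall>z. y<z \<and> z<y2 \<longrightarrow> z\<notin>C)"
    proof (intro allI impI)
      fix x2 y2 z assume p: "(x2,y2)\<in>R" and h: "x<x2" "\<forall>w. x<w \<and> w<x2 \<longrightarrow> w \<notin> B" and z: "y<z \<and> z<y2"
      have "\<forall>w. xl<w \<and> w<x2 \<longrightarrow> w \<notin> B"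
      proof (intro allI impI)
        fix w assume w: "xl<w \<and> w<x2"
        consider "w<x" | "w=x" | "x<w" by linarith
        thus "w \<notin> B" using h w xB freeO xx by cases auto
      qed
      moreover have "xl < x2" using h(1) xx by simp
      ultimately show "z \<notin> C" using Iv[OF a(1) p] z a(2) by auto
    qed
    show ?thesis using fin[OF xO _ G2 G3] yC by blast
  qed
qed

end

theorem mainTheorem5:
  shows "has_cofinal_orbits order_automorphisms_rat {A :: rat set. nowhere_dense A}"
  unfolding has_cofinal_orbits_def
proof
  fix a :: "rat set" assume "a \<in> {A. nowhere_dense A}"
  hence nda: "nowhere_dense a" by simp
  define F where "F = closure a"
  have clF: "closed F" unfolding F_def by simp
  have ndF: "nowhere_dense F" using nda unfolding F_def nowhere_dense_def by simp
  define b where "b = F \<union> KK F"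
  have "nowhere_dense b" unfolding b_def using BB_nd[OF clF ndF] .
  moreover have "is_large order_automorphisms_rat {A. nowhere_dense A} a b"
    unfolding is_large_def
  proof
    fix c :: "rat set" assume "c \<in> {A. nowhere_dense A}"
    hence ndc: "nowhere_dense c" by simp
    define C where "C = closure c"
    have clC: "closed C" unfolding C_def by simp
    have ndC: "nowhere_dense C" using ndc unfolding C_def nowhere_dense_def by simp
    have mono: "a1<c1 \<longleftrightarrow> b1<d1" if "Pinv F C R" "(a1,b1)\<in>R" "(c1,d1)\<in>R" for R a1 b1 c1 d1
      using that monoR_D unfolding Pinv_def wfR_def by blast
    have P0: "Pinv F C ((\<lambda>f. (f,f)) ` F)" using Pinv_init[OF clF ndF clC ndC] .
    have fo: "\<And>R x. Pinv F C R \<Longrightarrow> \<exists>y. Pinv F C (insert (x,y) R)"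
      using forth_P[OF clF ndF clC ndC] by blast
    have bo: "\<And>R y. Pinv F C R \<Longrightarrow> \<exists>x. Pinv F C (insert (x,y) R)"
      using back_P[OF clF ndF clC ndC] by blast
    obtain f where f: "bij f" "\<forall>x y. x \<le> y \<longleftrightarrow> f x \<le> f y" "\<forall>x. \<exists>R. Pinv F C R \<and> (x, f x) \<in> R"
    proof -
      have "\<exists>f. bij f \<and> (\<forall>x y. x \<le> y \<longleftrightarrow> f x \<le> f y) \<and> (\<forall>x. \<exists>R. Pinv F C R \<and> (x, f x) \<in> R)"
        by (rule back_forth[where P="Pinv F C"]) (use P0 fo bo mono in \<open>blast+\<close>)
      thus ?thesis using that by blast
    qed
    have fA: "f \<in> order_automorphisms_rat" unfolding order_automorphisms_rat_def using f(1,2) by blast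
    have fixa: "f x = x" if "x \<in> a" for x
    proof -
      have xF: "x \<in> F" using that closure_subset unfolding F_def by blast
      obtain R where R: "Pinv F C R" "(x, f x) \<in> R" using f(3) by blast
      have "wfR F R" using R(1) unfolding Pinv_def by blast
      thus ?thesis using wfR_F[OF _ R(2)] xF by metis
    qed
    have "f \<in> pstab order_automorphisms_rat a" unfolding pstab_def using fA fixa by blast
    moreover have "c \<subseteq> f ` b"
    proof
      fix z assume z: "z \<in> c"
      obtain x where x: "z = f x" using f(1) unfolding bij_def surj_def by metis
      obtain R where R: "Pinv F C R" "(x, f x) \<in> R" using f(3) by blast
      have "z \<in> C" using z closure_subset unfolding C_def by blast
      hence "x \<in> b" using R x unfolding Pinv_def b_def by blast
      thus "z \<in> f ` b" using x by blast
    qed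
    ultimately show "\<exists>\<gamma>\<in>pstab order_automorphisms_rat a. c \<subseteq> \<gamma> ` b" by blast
  qed
  ultimately show "\<exists>b\<in>{A. nowhere_dense A}. is_large order_automorphisms_rat {A. nowhere_dense A} a b" by blast
qed

end
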